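(* Let $\Phi_1,\dots,\Phi_N:\mathcal L(\mathbb C^d)\to\mathcal L(\mathbb C^d)$ be quantum channels and $\mathbf e^{(1)},\dots,\mathbf e^{(N)}$ orthonormal bases of $\mathbb C^d$ such that for all $i\ne j$ in $[N]$, $\langle G_{\Phi_i,\mathbf e^{(i)}}-\omega,\ G_{\Phi_j,\mathbf e^{(j)}}-\omega\rangle=0$ (Hilbert–Schmidt inner product). Then $$\min\Big\{\operatorname{Tr}H:\ H \text{ Hermitian},\ H\ge G_{\Phi_i,\mathbf e^{(i)}}\ \forall i\in[N]\Big\}=1-N+\sum_{i=1}^N\operatorname{Tr}G_{\Phi_i,\mathbf e^{(i)}}.$$
   Context: For $X=\sum_{i,j}X_{ij}|i\rangle\langle j|$, $|X\rangle:=\sum_{i,j}X_{ij}|i\rangle\otimes|j\rangle$. For a channel $\Phi$ with Hilbert–Schmidt adjoint $\Phi^*$ and an orthonormal basis $\mathbf e=(e_i)$, $G_{\Phi,\mathbf e}:=\sum_{i=1}^d |\Phi^*(|e_i\rangle\langle e_i|)\rangle\langle\Phi^*(|e_i\rangle\langle e_i|)|/\operatorname{Tr}\Phi^*(|e_i\rangle\langle e_i|)$ (terms with zero denominator omitted). $\omega:=\frac1d\sum_{i,j=1}^d|ii\rangle\langle jj|$ is the maximally entangled state. *)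

theory Defs
  imports "Jordan_Normal_Form.Matrix"
begin

text \<open>Matrices are Jordan_Normal_Form complex matrices. A vector/matrix on
  C^d (x) C^d is indexed by i*d + j for the basis vector |i> (x) |j>.\<close>

definition mtrace :: "complex mat \<Rightarrow> complex" where
  "mtrace A = (\<Sum>i<dim_row A. A $$ (i, i))"

definition mat_adj :: "complex mat \<Rightarrow> complex mat" where
  "mat_adj A = mat (dim_col A) (dim_row A) (\<lambda>(i, j). cnj (A $$ (j, i)))"

definition hs_inner :: "complex mat \<Rightarrow> complex mat \<Rightarrow> complex" where
  "hs_inner A B = mtrace (mat_adj A * B)"

definition cinner :: "complex vec \<Rightarrow> complex vec \<Rightarrow> complex" where
  "cinner v w = (\<Sum>i<dim_vec v. cnj (v $ i) * w $ i)"

definition hermitian_mat :: "nat \<Rightarrow> complex mat \<Rightarrow> bool" where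
  "hermitian_mat n A \<longleftrightarrow> A \<in> carrier_mat n n \<and> mat_adj A = A"

definition psd_mat :: "nat \<Rightarrow> complex mat \<Rightarrow> bool" where
  "psd_mat n A \<longleftrightarrow> A \<in> carrier_mat n n \<and>
     (\<forall>v \<in> carrier_vec n. cinner v (A *\<^sub>v v) \<in> \<real> \<and> 0 \<le> Re (cinner v (A *\<^sub>v v)))"

definition loewner_le :: "nat \<Rightarrow> complex mat \<Rightarrow> complex mat \<Rightarrow> bool" where
  "loewner_le n A B \<longleftrightarrow> A \<in> carrier_mat n n \<and> B \<in> carrier_mat n n \<and> psd_mat n (B - A)"

text \<open>Phi (x) id_n acting on (C^d (x) C^n)-matrices, index i*n + k for |i> (x) |k>.\<close>
definition ampl :: "nat \<Rightarrow> nat \<Rightarrow> (complex mat \<Rightarrow> complex mat) \<Rightarrow> complex mat \<Rightarrow> complex mat" where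
  "ampl d n \<Phi> X = mat (d * n) (d * n) (\<lambda>(a, b).
      \<Phi> (mat d d (\<lambda>(i, j). X $$ (i * n + a mod n, j * n + b mod n))) $$ (a div n, b div n))"

definition quantum_channel :: "nat \<Rightarrow> (complex mat \<Rightarrow> complex mat) \<Rightarrow> bool" where
  "quantum_channel d \<Phi> \<longleftrightarrow>
     (\<forall>A \<in> carrier_mat d d. \<Phi> A \<in> carrier_mat d d) \<and>
     (\<forall>A \<in> carrier_mat d d. \<forall>B \<in> carrier_mat d d. \<Phi> (A + B) = \<Phi> A + \<Phi> B) \<and>
     (\<forall>A \<in> carrier_mat d d. \<forall>c. \<Phi> (c \<cdot>\<^sub>m A) = c \<cdot>\<^sub>m \<Phi> A) \<and>
     (\<forall>n. \<forall>X. psd_mat (d * n) X \<longrightarrow> psd_mat (d * n) (ampl d n \<Phi> X)) \<and>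
     (\<forall>A \<in> carrier_mat d d. mtrace (\<Phi> A) = mtrace A)"

definition onb :: "nat \<Rightarrow> (nat \<Rightarrow> complex vec) \<Rightarrow> bool" where
  "onb d e \<longleftrightarrow> (\<forall>k<d. e k \<in> carrier_vec d) \<and>
     (\<forall>k<d. \<forall>l<d. cinner (e k) (e l) = (if k = l then 1 else 0))"

definition unit_mat_ij :: "nat \<Rightarrow> nat \<Rightarrow> nat \<Rightarrow> complex mat" where
  "unit_mat_ij d i j = mat d d (\<lambda>(a, b). if a = i \<and> b = j then 1 else 0)"

text \<open>Hilbert-Schmidt adjoint: the unique map with <Phi^*(A), B> = <A, Phi(B)>;
  its (i,j) entry is conj <A, Phi(|i><j|)>.\<close>
definition chan_adj :: "nat \<Rightarrow> (complex mat \<Rightarrow> complex mat) \<Rightarrow> complex mat \<Rightarrow> complex mat" where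
  "chan_adj d \<Phi> A = mat d d (\<lambda>(i, j). cnj (hs_inner A (\<Phi> (unit_mat_ij d i j))))"

definition ketbra :: "complex vec \<Rightarrow> complex mat" where
  "ketbra v = mat (dim_vec v) (dim_vec v) (\<lambda>(a, b). v $ a * cnj (v $ b))"

definition vecX :: "nat \<Rightarrow> complex mat \<Rightarrow> complex vec" where
  "vecX d X = vec (d * d) (\<lambda>k. X $$ (k div d, k mod d))"

definition Gmat :: "nat \<Rightarrow> (complex mat \<Rightarrow> complex mat) \<Rightarrow> (nat \<Rightarrow> complex vec) \<Rightarrow> complex mat" where
  "Gmat d \<Phi> e = mat (d * d) (d * d) (\<lambda>(a, b).
     \<Sum>i<d. (let P = chan_adj d \<Phi> (ketbra (e i)) in
              if mtrace P = 0 then 0 else ketbra (vecX d P) $$ (a, b) / mtrace P))"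

definition omega :: "nat \<Rightarrow> complex mat" where
  "omega d = mat (d * d) (d * d) (\<lambda>(a, b).
     if a div d = a mod d \<and> b div d = b mod d then 1 / of_nat d else 0)"

end

theory Submission
  imports Defs "Jordan_Normal_Form.Determinant"
begin


lemma cinner_expand: "dim_vec x = n \<Longrightarrow> cinner x y = (\<Sum>a<n. cnj (x$a) * y$a)"
  by (simp add: cinner_def)

lemma cnj_sq: "cnj z * z = of_real ((cmod z)^2)" "z * cnj z = of_real ((cmod z)^2)"
  using complex_norm_square[of z] by (simp_all add: mult.commute)

lemma mulv_expand: "A \<in> carrier_mat n n \<Longrightarrow> dim_vec v = n \<Longrightarrow> a < n \<Longrightarrow>
   (A *\<^sub>v v) $ a = (\<Sum>b<n. A $$ (a,b) * v $ b)"
  by (auto simp: scalar_prod_def atLeast0LessThan row_def)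

lemma quad_expand: "A \<in> carrier_mat n n \<Longrightarrow> dim_vec x = n \<Longrightarrow>
  cinner x (A *\<^sub>v x) = (\<Sum>a<n. \<Sum>b<n. cnj (x$a) * A$$(a,b) * x$b)"
  by (simp add: cinner_def mulv_expand sum_distrib_left mult.assoc del: index_mult_mat_vec)

lemma cinner_swap: "dim_vec x = dim_vec y \<Longrightarrow> cinner y x = cnj (cinner x y)"
  by (simp add: cinner_def mult.commute cnj_sum)

lemma cinner_self: "cinner x x = of_real (\<Sum>a<dim_vec x. (cmod (x$a))^2)"
  unfolding cinner_def of_real_sum
  by (intro sum.cong refl, simp only: cnj_sq)

lemma cinner_self_Re: "cinner x x = of_real (Re (cinner x x))" "Re (cinner x x) \<ge> 0"
proof -
  have e: "Re (cinner x x) = (\<Sum>a<dim_vec x. (cmod (x$a))^2)" by (subst cinner_self, simp)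
  show "cinner x x = of_real (Re (cinner x x))" by (subst e, rule cinner_self)
  show "Re (cinner x x) \<ge> 0" by (subst e, simp add: sum_nonneg)
qed

lemma cinner_self_zero: assumes "cinner x x = 0" shows "x = 0\<^sub>v (dim_vec x)"
proof -
  have "(\<Sum>a<dim_vec x. (cmod (x$a))^2) = 0" using assms cinner_self[of x] by (simp only: of_real_eq_0_iff)
  then have "\<forall>a\<in>{..<dim_vec x}. (cmod (x$a))^2 = 0"
    by (subst sum_nonneg_eq_0_iff[symmetric], auto)
  then show ?thesis by (intro eq_vecI, auto)
qed

lemma sum3_swap: "(\<Sum>a\<in>A. \<Sum>b\<in>B. \<Sum>k\<in>K. F a b k) = (\<Sum>k\<in>K. \<Sum>a\<in>A. \<Sum>b\<in>B. F a b k)"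
proof -
  have "(\<Sum>a\<in>A. \<Sum>b\<in>B. \<Sum>k\<in>K. F a b k) = (\<Sum>a\<in>A. \<Sum>k\<in>K. \<Sum>b\<in>B. F a b k)"
    by (rule sum.cong[OF refl], rule sum.swap)
  also have "\<dots> = (\<Sum>k\<in>K. \<Sum>a\<in>A. \<Sum>b\<in>B. F a b k)" by (rule sum.swap)
  finally show ?thesis .
qed

lemma sum4_swap: "(\<Sum>a\<in>A. \<Sum>b\<in>B. \<Sum>k\<in>K. \<Sum>l\<in>L. F a b k l) = (\<Sum>k\<in>K. \<Sum>l\<in>L. \<Sum>a\<in>A. \<Sum>b\<in>B. F a b k l)"
proof -
  have "(\<Sum>a\<in>A. \<Sum>b\<in>B. \<Sum>k\<in>K. \<Sum>l\<in>L. F a b k l) = (\<Sum>k\<in>K. \<Sum>a\<in>A. \<Sum>b\<in>B. \<Sum>l\<in>L. F a b k l)"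
    by (rule sum3_swap)
  also have "\<dots> = (\<Sum>k\<in>K. \<Sum>l\<in>L. \<Sum>a\<in>A. \<Sum>b\<in>B. F a b k l)"
    by (rule sum.cong[OF refl], rule sum3_swap)
  finally show ?thesis .
qed

definition rk :: "nat \<Rightarrow> nat \<Rightarrow> (nat \<Rightarrow> complex vec) \<Rightarrow> complex mat" where
 "rk n m w = mat n n (\<lambda>(a,b). \<Sum>k<m. w k $ a * cnj (w k $ b))"

lemma rk_carrier[simp]: "rk n m w \<in> carrier_mat n n" "dim_row (rk n m w) = n" "dim_col (rk n m w) = n"
  by (auto simp: rk_def)

lemma rk_index[simp]: "a < n \<Longrightarrow> b < n \<Longrightarrow> rk n m w $$ (a,b) = (\<Sum>k<m. w k $ a * cnj (w k $ b))"
  by (simp add: rk_def)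

lemma rk_quad: assumes "\<And>k. k<m \<Longrightarrow> dim_vec (w k) = n" "dim_vec x = n"
  shows "cinner x (rk n m w *\<^sub>v x) = (\<Sum>k<m. of_real ((cmod (cinner (w k) x))^2))"
proof -
  have "cinner x (rk n m w *\<^sub>v x) = (\<Sum>a<n. \<Sum>b<n. \<Sum>k<m. cnj (x$a) * w k $ a * (cnj (w k $ b) * x$b))"
    by (subst quad_expand[OF rk_carrier(1) assms(2)], simp add: sum_distrib_left sum_distrib_right mult.assoc)
  also have "\<dots> = (\<Sum>k<m. \<Sum>a<n. \<Sum>b<n. cnj (x$a) * w k $ a * (cnj (w k $ b) * x$b))"
    by (rule sum3_swap)
  also have "\<dots> = (\<Sum>k<m. (\<Sum>a<n. cnj (x$a) * w k $ a) * (\<Sum>b<n. cnj (w k $ b) * x$b))"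
    by (simp add: sum_product)
  also have "\<dots> = (\<Sum>k<m. of_real ((cmod (cinner (w k) x))^2))"
  proof (intro sum.cong refl)
    fix k assume k: "k \<in> {..<m}"
    have A: "(\<Sum>a<n. cnj (x$a) * w k $ a) = cnj (cinner (w k) x)"
      using assms k by (simp add: cinner_def cnj_sum mult.commute)
    have B: "(\<Sum>b<n. cnj (w k $ b) * x$b) = cinner (w k) x" using assms k by (simp add: cinner_def)
    show "(\<Sum>a<n. cnj (x$a) * w k $ a) * (\<Sum>b<n. cnj (w k $ b) * x$b) = of_real ((cmod (cinner (w k) x))^2)"
      by (simp only: A B cnj_sq(1))
  qed
  finally show ?thesis .
qed

lemma rk_trace: assumes "\<And>k. k<m \<Longrightarrow> dim_vec (w k) = n"
  shows "mtrace (rk n m w) = (\<Sum>k<m. cinner (w k) (w k))"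
  unfolding mtrace_def using assms
  by (simp add: cinner_def sum.swap[of _ "{..<n}"] mult.commute)

lemma rk_adj: "mat_adj (rk n m w) = rk n m w"
  by (intro eq_matI, auto simp: mat_adj_def cnj_sum mult.commute)

lemma rk_hs: assumes "\<And>k. k<m \<Longrightarrow> dim_vec (w k) = n" "\<And>k. k<m' \<Longrightarrow> dim_vec (v k) = n"
  shows "hs_inner (rk n m w) (rk n m' v) = (\<Sum>k<m. \<Sum>l<m'. of_real ((cmod (cinner (w k) (v l)))^2))"
proof -
  have "hs_inner (rk n m w) (rk n m' v) = (\<Sum>a<n. \<Sum>b<n. (\<Sum>k<m. w k $ a * cnj (w k $ b)) * (\<Sum>l<m'. v l $ b * cnj (v l $ a)))"
    unfolding hs_inner_def rk_adj mtrace_def by (simp add: scalar_prod_def atLeast0LessThan row_def col_def)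
  also have "\<dots> = (\<Sum>a<n. \<Sum>b<n. \<Sum>k<m. \<Sum>l<m'. (w k $ a * cnj (w k $ b)) * (v l $ b * cnj (v l $ a)))"
    by (simp only: sum_product)
  also have "\<dots> = (\<Sum>a<n. \<Sum>b<n. \<Sum>k<m. \<Sum>l<m'. (cnj (v l $ a) * w k $ a) * (cnj (w k $ b) * v l $ b))"
    by (intro sum.cong refl, simp add: mult_ac)
  also have "\<dots> = (\<Sum>k<m. \<Sum>l<m'. \<Sum>a<n. \<Sum>b<n. (cnj (v l $ a) * w k $ a) * (cnj (w k $ b) * v l $ b))"
    by (rule sum4_swap)
  also have "\<dots> = (\<Sum>k<m. \<Sum>l<m'. (\<Sum>a<n. cnj (v l $ a) * w k $ a) * (\<Sum>b<n. cnj (w k $ b) * v l $ b))"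
    by (simp add: sum_product)
  also have "\<dots> = (\<Sum>k<m. \<Sum>l<m'. of_real ((cmod (cinner (w k) (v l)))^2))"
  proof (intro sum.cong refl)
    fix k l assume k: "k \<in> {..<m}" and l: "l \<in> {..<m'}"
    have A: "(\<Sum>a<n. cnj (v l $ a) * w k $ a) = cnj (cinner (w k) (v l))"
      using assms k l by (simp add: cinner_def cnj_sum mult.commute)
    have B: "(\<Sum>b<n. cnj (w k $ b) * v l $ b) = cinner (w k) (v l)" using assms k by (simp add: cinner_def)
    show "(\<Sum>a<n. cnj (v l $ a) * w k $ a) * (\<Sum>b<n. cnj (w k $ b) * v l $ b) = of_real ((cmod (cinner (w k) (v l)))^2)"
      by (simp only: A B cnj_sq(1))
  qed
  finally show ?thesis .
qed

lemma sum_if_out: "(\<Sum>b\<in>B. if P then f b else 0) = (if P then (\<Sum>b\<in>B. f b) else 0)"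
  by simp

lemma quad1: assumes "A \<in> carrier_mat n n" "j < n"
  shows "cinner (unit_vec n j) (A *\<^sub>v unit_vec n j) = A $$ (j,j)"
  using assms by (simp add: quad_expand unit_vec_def if_distrib[of cnj] if_distrib[of "\<lambda>x. x * _"]
     if_distrib[of "\<lambda>x. _ * x"] sum_if_out sum.delta cong: if_cong)

lemma quad2: assumes "A \<in> carrier_mat n n" "j < n" "l < n" "j \<noteq> l"
  shows "cinner (vec n (\<lambda>a. if a = j then \<alpha> else if a = l then \<beta> else 0)) (A *\<^sub>v vec n (\<lambda>a. if a = j then \<alpha> else if a = l then \<beta> else 0))
    = cnj \<alpha> * \<alpha> * A$$(j,j) + cnj \<alpha> * \<beta> * A$$(j,l) + cnj \<beta> * \<alpha> * A$$(l,j) + cnj \<beta> * \<beta> * A$$(l,l)"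
proof -
  have e: "\<And>a. (if a = j then \<alpha> else if a = l then \<beta> else 0) = (if a = j then \<alpha> else 0) + (if a = l then \<beta> else 0)"
    using assms(4) by auto
  show ?thesis using assms
    by (simp add: quad_expand e distrib_left distrib_right sum.distrib if_distrib[of cnj] if_distrib[of "\<lambda>x. x * _"]
        if_distrib[of "\<lambda>x. _ * x"] sum.delta cong: if_cong)
qed

definition "xv n j l \<alpha> \<beta> = vec n (\<lambda>a. if a = j then \<alpha> else if a = l then \<beta> else 0)"

lemma xv_dim[simp]: "dim_vec (xv n j l \<alpha> \<beta>) = n" "xv n j l \<alpha> \<beta> \<in> carrier_vec n"
  by (auto simp: xv_def)

lemma psd_diag: assumes "psd_mat n A" "j < n" shows "A $$ (j,j) \<in> \<real>" "Re (A $$ (j,j)) \<ge> 0"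
  using assms quad1[of A n j] unfolding psd_mat_def by (metis unit_vec_carrier)+

lemma psd_herm: assumes "psd_mat n A" "j < n" "l < n" shows "A $$ (l,j) = cnj (A $$ (j,l))"
proof (cases "j = l")
  case True
  then show ?thesis using psd_diag[OF assms(1,2)] by (simp add: complex_is_Real_iff complex_eq_iff)
next
  case False
  have A: "A \<in> carrier_mat n n" using assms unfolding psd_mat_def by auto
  have q1: "cinner (xv n j l 1 1) (A *\<^sub>v xv n j l 1 1) \<in> \<real>"
    and q2: "cinner (xv n j l 1 \<i>) (A *\<^sub>v xv n j l 1 \<i>) \<in> \<real>"
    using assms(1) unfolding psd_mat_def by auto
  have r1: "A$$(j,j) + A$$(j,l) + A$$(l,j) + A$$(l,l) \<in> \<real>"
    using q1 unfolding xv_def quad2[OF A assms(2,3) False] by simp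
  have r2: "A$$(j,j) + \<i> * A$$(j,l) - \<i> * A$$(l,j) + A$$(l,l) \<in> \<real>"
    using q2 unfolding xv_def quad2[OF A assms(2,3) False] by simp
  have d1: "Im (A$$(j,j)) = 0" "Im (A$$(l,l)) = 0" using psd_diag[OF assms(1)] assms by (auto simp: complex_is_Real_iff)
  show ?thesis using r1 r2 d1 by (auto simp: complex_is_Real_iff complex_eq_iff)
qed

lemma psd_zero_trace: assumes "psd_mat n A" "mtrace A = 0" shows "A = 0\<^sub>m n n"
proof -
  have A: "A \<in> carrier_mat n n" using assms unfolding psd_mat_def by auto
  have "(\<Sum>j<n. Re (A$$(j,j))) = 0" using assms(2) A unfolding mtrace_def by (simp add: Re_sum[symmetric])
  then have "\<forall>j\<in>{..<n}. Re (A$$(j,j)) = 0"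
    by (subst sum_nonneg_eq_0_iff[symmetric], auto intro: psd_diag[OF assms(1)])
  then have diag: "\<And>j. j < n \<Longrightarrow> A$$(j,j) = 0"
    using psd_diag(1)[OF assms(1)] by (auto simp: complex_is_Real_iff complex_eq_iff)
  have off: "A$$(j,l) = 0" if jl: "j < n" "l < n" "j \<noteq> l" for j l
  proof -
    let ?z = "A$$(j,l)"
    have h: "A$$(l,j) = cnj ?z" using psd_herm[OF assms(1) jl(1,2)] .
    have "cinner (xv n j l 1 (- cnj ?z)) (A *\<^sub>v xv n j l 1 (- cnj ?z)) = - 2 * (cnj ?z * ?z)"
      unfolding xv_def using quad2[OF A jl, of 1 "- cnj ?z"] diag jl h by simp
    moreover have "Re (cinner (xv n j l 1 (- cnj ?z)) (A *\<^sub>v xv n j l 1 (- cnj ?z))) \<ge> 0"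
      using assms(1) unfolding psd_mat_def by auto
    ultimately have "Re (cnj ?z * ?z) \<le> 0" by simp
    then show ?thesis by (simp add: cnj_sq)
  qed
  show ?thesis using A diag off by (intro eq_matI, auto)
qed

lemma cinner_add_right: "dim_vec x = n \<Longrightarrow> dim_vec u = n \<Longrightarrow> dim_vec v = n \<Longrightarrow> cinner x (u + v) = cinner x u + cinner x v"
  by (simp add: cinner_def distrib_left sum.distrib)

lemma cinner_minus_right: "dim_vec x = n \<Longrightarrow> dim_vec u = n \<Longrightarrow> dim_vec v = n \<Longrightarrow> cinner x (u - v) = cinner x u - cinner x v"
  by (simp add: cinner_def right_diff_distrib sum_subtractf)

lemma quad_add: assumes "A \<in> carrier_mat n n" "B \<in> carrier_mat n n" "dim_vec x = n"
  shows "cinner x ((A + B) *\<^sub>v x) = cinner x (A *\<^sub>v x) + cinner x (B *\<^sub>v x)"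
  using assms by (subst add_mult_distrib_mat_vec[of _ n n], auto intro: cinner_add_right)

lemma quad_minus: assumes "A \<in> carrier_mat n n" "B \<in> carrier_mat n n" "dim_vec x = n"
  shows "cinner x ((A - B) *\<^sub>v x) = cinner x (A *\<^sub>v x) - cinner x (B *\<^sub>v x)"
  using assms by (subst minus_mult_distrib_mat_vec[of _ n n], auto intro: cinner_minus_right)

lemma psd_add: assumes "psd_mat n A" "psd_mat n B" shows "psd_mat n (A + B)"
  using assms unfolding psd_mat_def by (auto simp: quad_add)

lemma rk_psd: "(\<And>k. k<m \<Longrightarrow> dim_vec (w k) = n) \<Longrightarrow> psd_mat n (rk n m w)"
  unfolding psd_mat_def by (auto simp: rk_quad Re_sum[symmetric] sum_nonneg)

lemma quad_matsum: assumes "dim_vec x = n" "finite I"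
  shows "cinner x (mat n n (\<lambda>(a,b). \<Sum>i\<in>I. F i a b) *\<^sub>v x) = (\<Sum>i\<in>I. cinner x (mat n n (\<lambda>(a,b). F i a b) *\<^sub>v x))"
proof -
  have "cinner x (mat n n (\<lambda>(a,b). \<Sum>i\<in>I. F i a b) *\<^sub>v x) = (\<Sum>a<n. \<Sum>b<n. \<Sum>i\<in>I. cnj (x$a) * F i a b * x$b)"
    by (subst quad_expand[OF _ assms(1)], auto simp: sum_distrib_left sum_distrib_right)
  also have "\<dots> = (\<Sum>i\<in>I. \<Sum>a<n. \<Sum>b<n. cnj (x$a) * F i a b * x$b)" by (rule sum3_swap)
  also have "\<dots> = (\<Sum>i\<in>I. cinner x (mat n n (\<lambda>(a,b). F i a b) *\<^sub>v x))"
    by (intro sum.cong refl, subst quad_expand[OF _ assms(1)], auto)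
  finally show ?thesis .
qed

lemma cinner_lc_right: assumes "dim_vec x = n" "\<And>j. j < c \<Longrightarrow> dim_vec (f j) = n"
  shows "cinner x (vec n (\<lambda>a. \<Sum>j<c. co j * f j $ a)) = (\<Sum>j<c. co j * cinner x (f j))"
proof -
  have "cinner x (vec n (\<lambda>a. \<Sum>j<c. co j * f j $ a)) = (\<Sum>a<n. \<Sum>j<c. co j * (cnj (x$a) * f j $ a))"
    using assms by (simp add: cinner_def sum_distrib_left mult_ac)
  also have "\<dots> = (\<Sum>j<c. co j * cinner x (f j))"
    using assms by (subst sum.swap, simp add: cinner_def sum_distrib_left)
  finally show ?thesis .
qed

lemma cinner_lc_left: assumes "dim_vec y = n" "\<And>j. j < c \<Longrightarrow> dim_vec (f j) = n"
  shows "cinner (vec n (\<lambda>a. \<Sum>j<c. co j * f j $ a)) y = (\<Sum>j<c. cnj (co j) * cinner (f j) y)"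
proof -
  have "cinner (vec n (\<lambda>a. \<Sum>j<c. co j * f j $ a)) y = (\<Sum>a<n. \<Sum>j<c. cnj (co j) * (cnj (f j $ a) * y $ a))"
    using assms by (simp add: cinner_def sum_distrib_right sum_distrib_left cnj_sum mult_ac)
  also have "\<dots> = (\<Sum>j<c. cnj (co j) * cinner (f j) y)"
    using assms by (subst sum.swap, simp add: cinner_def sum_distrib_left)
  finally show ?thesis .
qed

lemma cinner_vec_left: "cinner (vec n h) y = (\<Sum>a<n. cnj (h a) * y $ a)"
  by (simp add: cinner_def)

lemma cinner_vec_right: "dim_vec x = n \<Longrightarrow> cinner x (vec n h) = (\<Sum>a<n. cnj (x $ a) * h a)"
  by (simp add: cinner_def)

lemma orth_delta: assumes "j < (c::nat)" "\<And>l. l < c \<Longrightarrow> cinner (f j) (f l) = (if j = l then 1 else 0)"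
  shows "(\<Sum>l<c. co l * cinner (f j) (f l)) = co j"
proof -
  have "(\<Sum>l<c. co l * cinner (f j) (f l)) = (\<Sum>l<c. if l = j then co j else 0)"
    by (intro sum.cong refl, auto simp: assms)
  also have "\<dots> = co j" using assms(1) by simp
  finally show ?thesis .
qed

lemma gram_schmidt_ex:
  fixes w :: "nat \<Rightarrow> complex vec"
  assumes "\<forall>k < m. dim_vec (w k) = n"
  shows "\<exists>(c::nat) f. (\<forall>j<c. dim_vec (f j) = n) \<and> (\<forall>j<c. \<forall>l<c. cinner (f j) (f l) = (if j = l then 1 else 0))
     \<and> (\<forall>k<m. w k = vec n (\<lambda>a. \<Sum>j<c. cinner (f j) (w k) * f j $ a))
     \<and> (\<forall>v. dim_vec v = n \<longrightarrow> (\<forall>k<m. cinner (w k) v = 0) \<longrightarrow> (\<forall>j<c. cinner (f j) v = 0))"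
  using assms
proof (induction m)
  case 0
  show ?case by (rule exI[where x="0::nat"], simp)
next
  case (Suc m)
  have pm: "\<forall>k < m. dim_vec (w k) = n" using Suc.prems by auto
  obtain c :: nat and f where fd: "\<forall>j<c. dim_vec (f j) = n"
    and fo: "\<forall>j<c. \<forall>l<c. cinner (f j) (f l) = (if j = l then 1 else 0)"
    and fs: "\<forall>k<m. w k = vec n (\<lambda>a. \<Sum>j<c. cinner (f j) (w k) * f j $ a)"
    and fp: "\<forall>v. dim_vec v = n \<longrightarrow> (\<forall>k<m. cinner (w k) v = 0) \<longrightarrow> (\<forall>j<c. cinner (f j) v = 0)"
    using Suc.IH[OF pm] by blast
  define W where "W = w m"
  have Wd: "dim_vec W = n" using Suc.prems W_def by auto
  define pr where "pr = vec n (\<lambda>a. \<Sum>j<c. cinner (f j) W * f j $ a)"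
  define r where "r = vec n (\<lambda>a. W $ a - pr $ a)"
  have rd: "dim_vec r = n" and prd: "dim_vec pr = n" by (auto simp: r_def pr_def)
  have key1: "cinner (f j) r = 0" if j: "j < c" for j
  proof -
    have "cinner (f j) r = cinner (f j) W - cinner (f j) pr"
      using fd j Wd unfolding r_def by (simp add: cinner_def right_diff_distrib sum_subtractf pr_def)
    also have "cinner (f j) pr = (\<Sum>l<c. cinner (f l) W * cinner (f j) (f l))"
      unfolding pr_def by (rule cinner_lc_right, insert fd j, auto)
    also have "\<dots> = cinner (f j) W" by (rule orth_delta, insert fo j, auto)
    finally show ?thesis by simp
  qed
  have key2: "cinner r (vec n (\<lambda>a. \<Sum>j<c. co j * f j $ a)) = 0" for co
  proof -
    have "cinner r (vec n (\<lambda>a. \<Sum>j<c. co j * f j $ a)) = (\<Sum>j<c. co j * cinner r (f j))"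
      by (rule cinner_lc_right, insert fd rd, auto)
    also have "\<dots> = 0"
      by (intro sum.neutral ballI, simp, subst cinner_swap, insert fd rd key1, auto)
    finally show ?thesis .
  qed
  show ?case
  proof (cases "r = 0\<^sub>v n")
    case True
    have "W $ a = pr $ a" if "a < n" for a
    proof -
      have "r $ a = 0" using True that by simp
      then show ?thesis using that unfolding r_def by simp
    qed
    then have Wpr: "W = pr" using Wd prd by (intro eq_vecI, auto)
    show ?thesis
    proof (intro exI[of _ c] exI[of _ f] conjI allI impI)
      show "\<And>j. j < c \<Longrightarrow> dim_vec (f j) = n" using fd by auto
      show "\<And>j l. j < c \<Longrightarrow> l < c \<Longrightarrow> cinner (f j) (f l) = (if j = l then 1 else 0)" using fo by auto
      show "w k = vec n (\<lambda>a. \<Sum>j<c. cinner (f j) (w k) * f j $ a)" if "k < Suc m" for k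
      proof (cases "k = m")
        case True
        show ?thesis using Wpr unfolding W_def pr_def True .
      next
        case False
        then have "k < m" using that by auto
        then show ?thesis using fs by blast
      qed
      show "cinner (f j) v = 0" if "dim_vec v = n" "\<forall>k<Suc m. cinner (w k) v = 0" "j < c" for v j
        using fp that by auto
    qed
  next
    case False
    have rr: "cinner r r = of_real (Re (cinner r r))" "Re (cinner r r) \<ge> 0" by (rule cinner_self_Re)+
    have "Re (cinner r r) \<noteq> 0"
    proof
      assume "Re (cinner r r) = 0"
      then have "cinner r r = 0" by (subst rr(1), simp)
      then have "r = 0\<^sub>v n" using cinner_self_zero[of r] rd by simp
      then show False using False by simp
    qed
    then have rpos: "Re (cinner r r) > 0" using rr(2) by auto
    define s where "s = sqrt (Re (cinner r r))"
    have spos: "s > 0" using rpos s_def by auto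
    have ss: "complex_of_real s * complex_of_real s = cinner r r"
    proof -
      have "s * s = Re (cinner r r)" using rr(2) s_def by simp
      then have "complex_of_real s * complex_of_real s = of_real (Re (cinner r r))" by (simp flip: of_real_mult)
      then show ?thesis by (subst rr(1))
    qed
    define g where "g = vec n (\<lambda>a. r $ a / of_real s)"
    have gd: "dim_vec g = n" by (simp add: g_def)
    have gsm: "cinner g y = cinner r y / of_real s" if "dim_vec y = n" for y
      using that rd by (simp add: g_def cinner_def sum_divide_distrib)
    have gsm2: "cinner y g = cinner y r / of_real s" if "dim_vec y = n" for y
      using that rd by (simp add: g_def cinner_def sum_divide_distrib)
    define f' where "f' = f(c := g)"
    have f'd: "\<forall>j<Suc c. dim_vec (f' j) = n" using fd gd f'_def by auto
    have snz: "complex_of_real s \<noteq> 0" using spos by simp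
    have rnz: "cinner r r \<noteq> 0" using ss snz by (metis mult_eq_0_iff)
    have gg: "cinner g g = 1" using gsm[OF gd] gsm2[OF rd] ss spos rnz
      by (simp add: field_simps)
    have fg: "cinner (f j) g = 0" if "j < c" for j using gsm2[of "f j"] key1[OF that] fd that by auto
    have gf: "cinner g (f j) = 0" if "j < c" for j using cinner_swap[of "f j" g] fg[OF that] fd gd that by auto
    have sum_ext: "(\<Sum>j<Suc c. cinner (f' j) y * f' j $ a) = (\<Sum>j<c. cinner (f j) y * f j $ a) + cinner g y * g $ a" for y a
      by (simp add: f'_def)
    show ?thesis
    proof (intro exI[of _ "Suc c"] exI[of _ f'] conjI allI impI)
      show "\<And>j. j < Suc c \<Longrightarrow> dim_vec (f' j) = n" using f'd by auto
      show "cinner (f' j) (f' l) = (if j = l then 1 else 0)" if "j < Suc c" "l < Suc c" for j l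
        using that fo fg gf gg unfolding f'_def by (cases "j = c"; cases "l = c", auto)
      show "w k = vec n (\<lambda>a. \<Sum>j<Suc c. cinner (f' j) (w k) * f' j $ a)" if k: "k < Suc m" for k
      proof (cases "k = m")
        case False
        then have km: "k < m" using k by auto
        have wk: "w k = vec n (\<lambda>a. \<Sum>j<c. cinner (f j) (w k) * f j $ a)" using fs km by auto
        have "cinner r (w k) = 0" by (subst wk, rule key2)
        then have g0: "cinner g (w k) = 0" using gsm Suc.prems km by auto
        show ?thesis unfolding sum_ext g0 mult_zero_left add_0_right by (rule wk)
      next
        case True
        have "cinner r W = (\<Sum>a<n. cnj (r$a) * (r$a + pr$a))"
          unfolding cinner_def rd by (intro sum.cong refl, simp add: r_def)
        also have "\<dots> = cinner r r + cinner r pr"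
          unfolding cinner_def rd by (simp add: distrib_left sum.distrib)
        also have "cinner r pr = 0" unfolding pr_def by (rule key2)
        finally have rW: "cinner r W = cinner r r" by simp
        have gW: "cinner g W * g $ a = r $ a" if "a < n" for a
        proof -
          have cgW: "cinner g W = complex_of_real s"
            using snz by (simp add: gsm[OF Wd] rW ss[symmetric])
          show ?thesis using that snz unfolding cgW by (simp add: g_def)
        qed
        show ?thesis unfolding sum_ext True W_def[symmetric]
          using Wd gW by (intro eq_vecI, auto simp: r_def pr_def)
      qed
      show "cinner (f' j) v = 0" if v: "dim_vec v = n" "\<forall>k<Suc m. cinner (w k) v = 0" and j: "j < Suc c" for v j
      proof (cases "j = c")
        case False
        then show ?thesis using fp v j unfolding f'_def by auto
      next
        case True
        have "cinner r v = cinner W v - cinner pr v"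
          using rd prd Wd v by (simp add: cinner_def r_def algebra_simps sum_subtractf)
        also have "cinner pr v = (\<Sum>l<c. cnj (cinner (f l) W) * cinner (f l) v)"
          unfolding pr_def by (rule cinner_lc_left, insert fd v, auto)
        also have "\<dots> = 0" using fp v by auto
        also have "cinner W v = 0" using v W_def by auto
        finally have "cinner r v = 0" by simp
        then show ?thesis using True gsm v f'_def by auto
      qed
    qed
  qed
qed

lemma psd_quadD: "psd_mat n A \<Longrightarrow> v \<in> carrier_vec n \<Longrightarrow> cinner v (A *\<^sub>v v) \<in> \<real> \<and> 0 \<le> Re (cinner v (A *\<^sub>v v))"
  by (simp add: psd_mat_def)

lemma bessel:
  assumes H: "psd_mat n H" and S: "finite S" and fd: "\<forall>x\<in>S. dim_vec (f x) = n"
    and fo: "\<forall>x\<in>S. \<forall>y\<in>S. cinner (f x) (f y) = (if x = y then 1 else 0)"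
  shows "Re (\<Sum>x\<in>S. cinner (f x) (H *\<^sub>v f x)) \<le> Re (mtrace H)"
proof -
  have Hc: "H \<in> carrier_mat n n" using H unfolding psd_mat_def by auto
  define K where "K a b = (\<Sum>x\<in>S. f x $ a * cnj (f x $ b))" for a b
  have KK: "(\<Sum>j<n. K b j * K j a) = K b a" for a b
  proof -
    have "(\<Sum>j<n. K b j * K j a) = (\<Sum>j<n. \<Sum>x\<in>S. \<Sum>y\<in>S. (f x $ b * cnj (f x $ j)) * (f y $ j * cnj (f y $ a)))"
      by (simp only: K_def sum_product)
    also have "\<dots> = (\<Sum>j<n. \<Sum>x\<in>S. \<Sum>y\<in>S. (f x $ b * cnj (f y $ a)) * (cnj (f x $ j) * f y $ j))"
      by (intro sum.cong refl, simp add: mult_ac)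
    also have "\<dots> = (\<Sum>x\<in>S. \<Sum>y\<in>S. \<Sum>j<n. (f x $ b * cnj (f y $ a)) * (cnj (f x $ j) * f y $ j))"
      by (rule sum3_swap[symmetric])
    also have "\<dots> = (\<Sum>x\<in>S. \<Sum>y\<in>S. (f x $ b * cnj (f y $ a)) * cinner (f x) (f y))"
      using fd by (intro sum.cong refl, simp add: cinner_def sum_distrib_left)
    also have "\<dots> = (\<Sum>x\<in>S. \<Sum>y\<in>S. if x = y then f x $ b * cnj (f y $ a) else 0)"
      using fo by (intro sum.cong refl, simp)
    also have "\<dots> = K b a" using S by (simp add: K_def)
    finally show ?thesis .
  qed
  have Kc: "cnj (K a b) = K b a" for a b by (simp add: K_def cnj_sum mult.commute)
  define c where "c j = vec n (\<lambda>a. (if a = j then 1 else 0) - K a j)" for j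
  have cd: "dim_vec (c j) = n" for j by (simp add: c_def)
  have M: "(\<Sum>j<n. cnj (c j $ a) * c j $ b) = (if a = b then 1 else 0) - K b a" if ab: "a < n" "b < n" for a b
  proof -
    have "(\<Sum>j<n. cnj (c j $ a) * c j $ b) = (\<Sum>j<n. ((if a = j then 1 else 0) - K j a) * ((if b = j then 1 else 0) - K b j))"
      using ab by (intro sum.cong refl, simp add: c_def Kc)
    also have "\<dots> = (\<Sum>j<n. (if a = j then (if b = j then 1 else 0) else 0) - (if a = j then K b j else 0)
        - (if b = j then K j a else 0) + K b j * K j a)"
    proof (intro sum.cong refl)
      fix j
      have e: "(x - y) * (z - w) = x * z - x * w - y * z + w * y" for x y z w :: complex by (simp add: algebra_simps)
      show "((if a = j then 1 else 0) - K j a) * ((if b = j then 1 else 0) - K b j) =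
        (if a = j then (if b = j then 1 else 0) else 0) - (if a = j then K b j else 0)
        - (if b = j then K j a else 0) + K b j * K j a"
        unfolding e by simp
    qed
    also have "\<dots> = (\<Sum>j<n. (if a = j then (if b = j then 1 else 0) else 0)) - (\<Sum>j<n. (if a = j then K b j else 0))
        - (\<Sum>j<n. (if b = j then K j a else 0)) + (\<Sum>j<n. K b j * K j a)"
      by (simp only: sum.distrib sum_subtractf)
    also have "\<dots> = (if b = a then 1 else 0) - K b a - K b a + K b a"
      using ab by (simp only: KK sum.delta' finite_lessThan lessThan_iff if_True)
    finally show ?thesis by (cases "a = b") simp_all
  qed
  have sumc: "(\<Sum>j<n. cinner (c j) (H *\<^sub>v c j)) = mtrace H - (\<Sum>x\<in>S. cinner (f x) (H *\<^sub>v f x))"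
  proof -
    have "(\<Sum>j<n. cinner (c j) (H *\<^sub>v c j)) = (\<Sum>j<n. \<Sum>a<n. \<Sum>b<n. cnj (c j $ a) * H $$ (a,b) * c j $ b)"
      by (intro sum.cong refl, rule quad_expand[OF Hc cd])
    also have "\<dots> = (\<Sum>a<n. \<Sum>b<n. \<Sum>j<n. cnj (c j $ a) * H $$ (a,b) * c j $ b)"
      by (rule sum3_swap[symmetric])
    also have "\<dots> = (\<Sum>a<n. \<Sum>b<n. H $$ (a,b) * (\<Sum>j<n. cnj (c j $ a) * c j $ b))"
    proof (intro sum.cong refl)
      fix a b
      show "(\<Sum>j<n. cnj (c j $ a) * H $$ (a, b) * c j $ b) = H $$ (a,b) * (\<Sum>j<n. cnj (c j $ a) * c j $ b)"
        by (simp only: sum_distrib_left, intro sum.cong refl, simp only: mult_ac)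
    qed
    also have "\<dots> = (\<Sum>a<n. \<Sum>b<n. (if a = b then H $$ (a,b) else 0) - H $$ (a,b) * K b a)"
    proof (intro sum.cong refl)
      fix a b assume "a \<in> {..<n}" "b \<in> {..<n}"
      then show "H $$ (a,b) * (\<Sum>j<n. cnj (c j $ a) * c j $ b) = (if a = b then H $$ (a,b) else 0) - H $$ (a,b) * K b a"
        by (simp only: M lessThan_iff, simp add: right_diff_distrib)
    qed
    also have "\<dots> = (\<Sum>a<n. \<Sum>b<n. (if a = b then H $$ (a,b) else 0)) - (\<Sum>a<n. \<Sum>b<n. H $$ (a,b) * K b a)"
      by (simp only: sum_subtractf)
    also have "(\<Sum>a<n. \<Sum>b<n. (if a = b then H $$ (a,b) else 0)) = mtrace H"
    proof -
      have dr: "dim_row H = n" using Hc by simp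
      show ?thesis unfolding mtrace_def dr
        by (intro sum.cong refl, simp only: sum.delta' finite_lessThan lessThan_iff if_True)
    qed
    also have "(\<Sum>a<n. \<Sum>b<n. H $$ (a,b) * K b a) = (\<Sum>a<n. \<Sum>b<n. \<Sum>x\<in>S. cnj (f x $ a) * H $$ (a,b) * f x $ b)"
      unfolding K_def by (intro sum.cong refl, simp only: sum_distrib_left, intro sum.cong refl, simp only: mult_ac)
    also have "\<dots> = (\<Sum>x\<in>S. \<Sum>a<n. \<Sum>b<n. cnj (f x $ a) * H $$ (a,b) * f x $ b)"
      by (rule sum3_swap)
    also have "\<dots> = (\<Sum>x\<in>S. cinner (f x) (H *\<^sub>v f x))"
      using Hc fd by (intro sum.cong refl, simp add: quad_expand)
    finally show ?thesis .
  qed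
  have cc: "c j \<in> carrier_vec n" for j by (rule carrier_vecI[OF cd])
  have "0 \<le> Re (cinner (c j) (H *\<^sub>v c j))" for j by (rule conjunct2[OF psd_quadD[OF H cc]])
  then have "Re (\<Sum>j<n. cinner (c j) (H *\<^sub>v c j)) \<ge> 0"
    unfolding Re_sum by (intro sum_nonneg)
  then show ?thesis unfolding sumc by simp
qed

lemma parseval: assumes "\<forall>j<c. dim_vec (f j) = n" "dim_vec w = n"
  "w = vec n (\<lambda>a. \<Sum>j<c. cinner (f j) w * f j $ a)"
  shows "Re (cinner w w) = (\<Sum>j<c. (cmod (cinner (f j) w))^2)"
proof -
  have "cinner w w = cinner w (vec n (\<lambda>a. \<Sum>j<c. cinner (f j) w * f j $ a))"
    using arg_cong[OF assms(3), of "cinner w"] .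
  also have "\<dots> = (\<Sum>j<c. cinner (f j) w * cinner w (f j))"
    by (rule cinner_lc_right, insert assms(1,2), auto)
  also have "\<dots> = (\<Sum>j<c. of_real ((cmod (cinner (f j) w))^2))"
  proof (intro sum.cong refl)
    fix j assume "j \<in> {..<c}"
    then have "cinner w (f j) = cnj (cinner (f j) w)" using assms(1,2) by (intro cinner_swap, auto)
    then show "cinner (f j) w * cinner w (f j) = of_real ((cmod (cinner (f j) w))^2)"
      by (simp only: cnj_sq(2))
  qed
  finally show ?thesis by (simp only: Re_sum Re_complex_of_real)
qed

lemma quad_lower: assumes "psd_mat n (H - G)" "H \<in> carrier_mat n n" "G \<in> carrier_mat n n" "dim_vec v = n"
  shows "Re (cinner v (G *\<^sub>v v)) \<le> Re (cinner v (H *\<^sub>v v))"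
proof -
  have "0 \<le> Re (cinner v ((H - G) *\<^sub>v v))"
    by (rule conjunct2[OF psd_quadD[OF assms(1) carrier_vecI[OF assms(4)]]])
  also have "cinner v ((H - G) *\<^sub>v v) = cinner v (H *\<^sub>v v) - cinner v (G *\<^sub>v v)"
    by (rule quad_minus[OF assms(2,3,4)])
  finally show ?thesis by simp
qed

lemma G_quad: assumes "dim_vec u = n" "\<forall>k<m. dim_vec (w k) = n" "dim_vec v = n"
  shows "Re (cinner v ((rk n 1 (\<lambda>_. u) + rk n m w) *\<^sub>v v)) = (cmod (cinner u v))^2 + (\<Sum>k<m. (cmod (cinner (w k) v))^2)"
proof -
  have "cinner v ((rk n 1 (\<lambda>_. u) + rk n m w) *\<^sub>v v) = cinner v (rk n 1 (\<lambda>_. u) *\<^sub>v v) + cinner v (rk n m w *\<^sub>v v)"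
    by (rule quad_add[OF rk_carrier(1) rk_carrier(1) assms(3)])
  also have "cinner v (rk n 1 (\<lambda>_. u) *\<^sub>v v) = of_real ((cmod (cinner u v))^2)"
    using rk_quad[of 1 "\<lambda>_. u" n v] assms by simp
  also have "cinner v (rk n m w *\<^sub>v v) = (\<Sum>k<m. of_real ((cmod (cinner (w k) v))^2))"
    by (rule rk_quad, insert assms, auto)
  finally show ?thesis by (simp add: Re_sum)
qed

lemma lower_abstract:
  fixes N m n :: nat and u :: "complex vec" and w :: "nat \<Rightarrow> nat \<Rightarrow> complex vec" and H :: "complex mat"
  assumes N: "N \<ge> 1" and ud: "dim_vec u = n" and uu: "cinner u u = 1"
    and wd: "\<forall>i<N. \<forall>k<m. dim_vec (w i k) = n"
    and wu: "\<forall>i<N. \<forall>k<m. cinner (w i k) u = 0"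
    and ww: "\<forall>i<N. \<forall>j<N. i \<noteq> j \<longrightarrow> (\<forall>k<m. \<forall>l<m. cinner (w i k) (w j l) = 0)"
    and Hc: "H \<in> carrier_mat n n"
    and HG: "\<forall>i<N. psd_mat n (H - (rk n 1 (\<lambda>_. u) + rk n m (w i)))"
  shows "1 + (\<Sum>i<N. \<Sum>k<m. Re (cinner (w i k) (w i k))) \<le> Re (mtrace H)"
proof -
  define G where "G i = rk n 1 (\<lambda>_. u) + rk n m (w i)" for i
  have Gc: "G i \<in> carrier_mat n n" for i unfolding G_def by auto
  have "\<forall>i. \<exists>p::nat \<times> (nat \<Rightarrow> complex vec). i < N \<longrightarrow> (\<forall>j<fst p. dim_vec (snd p j) = n) \<and> (\<forall>j<fst p. \<forall>l<fst p. cinner (snd p j) (snd p l) = (if j = l then 1 else 0))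
     \<and> (\<forall>k<m. w i k = vec n (\<lambda>a. \<Sum>j<fst p. cinner (snd p j) (w i k) * snd p j $ a))
     \<and> (\<forall>v. dim_vec v = n \<longrightarrow> (\<forall>k<m. cinner (w i k) v = 0) \<longrightarrow> (\<forall>j<fst p. cinner (snd p j) v = 0))"
  proof
    fix i
    show "\<exists>p::nat \<times> (nat \<Rightarrow> complex vec). i < N \<longrightarrow> (\<forall>j<fst p. dim_vec (snd p j) = n) \<and> (\<forall>j<fst p. \<forall>l<fst p. cinner (snd p j) (snd p l) = (if j = l then 1 else 0))
     \<and> (\<forall>k<m. w i k = vec n (\<lambda>a. \<Sum>j<fst p. cinner (snd p j) (w i k) * snd p j $ a))
     \<and> (\<forall>v. dim_vec v = n \<longrightarrow> (\<forall>k<m. cinner (w i k) v = 0) \<longrightarrow> (\<forall>j<fst p. cinner (snd p j) v = 0))"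
    proof (cases "i < N")
      case True
      then have "\<forall>k<m. dim_vec (w i k) = n" using wd by auto
      from gram_schmidt_ex[OF this] obtain c :: nat and f where
        "(\<forall>j<c. dim_vec (f j) = n) \<and> (\<forall>j<c. \<forall>l<c. cinner (f j) (f l) = (if j = l then 1 else 0))
     \<and> (\<forall>k<m. w i k = vec n (\<lambda>a. \<Sum>j<c. cinner (f j) (w i k) * f j $ a))
     \<and> (\<forall>v. dim_vec v = n \<longrightarrow> (\<forall>k<m. cinner (w i k) v = 0) \<longrightarrow> (\<forall>j<c. cinner (f j) v = 0))" by blast
      then show ?thesis by (intro exI[of _ "(c, f)"] impI) (simp only: fst_conv snd_conv)
    qed auto
  qed
  from choice[OF this] obtain p :: "nat \<Rightarrow> nat \<times> (nat \<Rightarrow> complex vec)" where p: "\<forall>i. i < N \<longrightarrow> (\<forall>j<fst (p i). dim_vec (snd (p i) j) = n) \<and> (\<forall>j<fst (p i). \<forall>l<fst (p i). cinner (snd (p i) j) (snd (p i) l) = (if j = l then 1 else 0))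
     \<and> (\<forall>k<m. w i k = vec n (\<lambda>a. \<Sum>j<fst (p i). cinner (snd (p i) j) (w i k) * snd (p i) j $ a))
     \<and> (\<forall>v. dim_vec v = n \<longrightarrow> (\<forall>k<m. cinner (w i k) v = 0) \<longrightarrow> (\<forall>j<fst (p i). cinner (snd (p i) j) v = 0))" by blast
  define C where "C i = fst (p i)" for i
  define F where "F i = snd (p i)" for i
  have Fd: "\<And>i j. i < N \<Longrightarrow> j < C i \<Longrightarrow> dim_vec (F i j) = n" using p unfolding C_def F_def by blast
  have Fo: "\<And>i j l. i < N \<Longrightarrow> j < C i \<Longrightarrow> l < C i \<Longrightarrow> cinner (F i j) (F i l) = (if j = l then 1 else 0)"
    using p unfolding C_def F_def by blast
  have Fs: "\<And>i k. i < N \<Longrightarrow> k < m \<Longrightarrow> w i k = vec n (\<lambda>a. \<Sum>j<C i. cinner (F i j) (w i k) * F i j $ a)"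
    using p unfolding C_def F_def by blast
  have Fp: "\<And>i v j. i < N \<Longrightarrow> dim_vec v = n \<Longrightarrow> (\<forall>k<m. cinner (w i k) v = 0) \<Longrightarrow> j < C i \<Longrightarrow> cinner (F i j) v = 0"
    using p unfolding C_def F_def by blast
  have Fu: "cinner (F i j) u = 0" if "i < N" "j < C i" for i j
    using Fp[OF that(1) ud _ that(2)] wu that(1) by blast
  have uF: "cinner u (F i j) = 0" if "i < N" "j < C i" for i j
    using cinner_swap[of "F i j" u] Fu[OF that] Fd[OF that] ud by simp
  have FF: "cinner (F i j) (F i' j') = 0" if "i < N" "j < C i" "i' < N" "j' < C i'" "i \<noteq> i'" for i j i' j'
  proof -
    have "cinner (w i k) (F i' j') = 0" if k: "k < m" for k
    proof -
      have "cinner (F i' j') (w i k) = 0"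
        by (rule Fp[OF \<open>i' < N\<close> _ _ \<open>j' < C i'\<close>], insert wd ww \<open>i < N\<close> \<open>i' < N\<close> \<open>i \<noteq> i'\<close> k, auto)
      then show ?thesis using cinner_swap[of "F i' j'" "w i k"] Fd[OF \<open>i' < N\<close> \<open>j' < C i'\<close>] wd \<open>i < N\<close> k by simp
    qed
    then show ?thesis by (intro Fp[OF \<open>i < N\<close> Fd[OF \<open>i' < N\<close> \<open>j' < C i'\<close>] _ \<open>j < C i\<close>], auto)
  qed
  define T where "T = (SIGMA i:{..<N}. {..<C i})"
  define S where "S = insert None (Some ` T)"
  define g where "g s = (case s of None \<Rightarrow> u | Some (i,j) \<Rightarrow> F i j)" for s
  have Sf: "finite S" unfolding S_def T_def by auto
  have gd: "\<forall>s\<in>S. dim_vec (g s) = n" unfolding S_def T_def g_def using ud Fd by auto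
  have go: "\<forall>s\<in>S. \<forall>t\<in>S. cinner (g s) (g t) = (if s = t then 1 else 0)"
  proof -
    have Fall: "cinner (F i j) (F i' j') = (if (i,j) = (i',j') then 1 else 0)"
      if "i < N" "j < C i" "i' < N" "j' < C i'" for i j i' j'
    proof (cases "i = i'")
      case True
      then show ?thesis using Fo[of i j j'] that by auto
    next
      case False
      then show ?thesis using FF[OF that False] by auto
    qed
    show ?thesis unfolding S_def T_def g_def using uu Fu uF Fall by (auto split: option.splits)
  qed
  have H0: "psd_mat n H"
  proof -
    have "psd_mat n ((H - G 0) + G 0)"
      by (rule psd_add, insert HG N, simp add: G_def, unfold G_def, intro psd_add rk_psd, insert ud wd N, auto)
    moreover have "(H - G 0) + G 0 = H" using Hc Gc[of 0] by (intro eq_matI, auto)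
    ultimately show ?thesis by simp
  qed
  have bes: "Re (\<Sum>s\<in>S. cinner (g s) (H *\<^sub>v g s)) \<le> Re (mtrace H)"
    by (rule bessel[OF H0 Sf gd go])
  have sumS: "(\<Sum>s\<in>S. cinner (g s) (H *\<^sub>v g s)) = cinner u (H *\<^sub>v u) + (\<Sum>i<N. \<Sum>j<C i. cinner (F i j) (H *\<^sub>v F i j))"
  proof -
    have "(\<Sum>s\<in>S. cinner (g s) (H *\<^sub>v g s)) = cinner u (H *\<^sub>v u) + (\<Sum>s\<in>Some ` T. cinner (g s) (H *\<^sub>v g s))"
      unfolding S_def by (subst sum.insert, auto simp: T_def g_def)
    also have "(\<Sum>s\<in>Some ` T. cinner (g s) (H *\<^sub>v g s)) = (\<Sum>q\<in>T. cinner (g (Some q)) (H *\<^sub>v g (Some q)))"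
      by (rule sum.reindex_cong[of Some], auto)
    also have "\<dots> = (\<Sum>(i,j)\<in>T. cinner (F i j) (H *\<^sub>v F i j))"
      by (intro sum.cong refl, auto simp: g_def)
    also have "\<dots> = (\<Sum>i<N. \<Sum>j<C i. cinner (F i j) (H *\<^sub>v F i j))"
      unfolding T_def by (rule sum.Sigma[symmetric], auto)
    finally show ?thesis .
  qed
  have lu: "1 \<le> Re (cinner u (H *\<^sub>v u))"
  proof -
    have "Re (cinner u (G 0 *\<^sub>v u)) \<le> Re (cinner u (H *\<^sub>v u))"
      by (rule quad_lower[OF _ Hc Gc ud], insert HG N, auto simp: G_def)
    moreover have "Re (cinner u (G 0 *\<^sub>v u)) = (cmod (cinner u u))^2 + (\<Sum>k<m. (cmod (cinner (w 0 k) u))^2)"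
      unfolding G_def by (rule G_quad, insert ud wd N, auto)
    moreover have "(\<Sum>k<m. (cmod (cinner (w 0 k) u))^2) = 0" using wu N by auto
    ultimately show ?thesis using uu by simp
  qed
  have lF: "(\<Sum>k<m. (cmod (cinner (w i k) (F i j)))^2) \<le> Re (cinner (F i j) (H *\<^sub>v F i j))"
    if "i < N" "j < C i" for i j
  proof -
    have "Re (cinner (F i j) (G i *\<^sub>v F i j)) \<le> Re (cinner (F i j) (H *\<^sub>v F i j))"
      by (rule quad_lower[OF _ Hc Gc Fd[OF that]], insert HG that, auto simp: G_def)
    moreover have "Re (cinner (F i j) (G i *\<^sub>v F i j)) = (cmod (cinner u (F i j)))^2 + (\<Sum>k<m. (cmod (cinner (w i k) (F i j)))^2)"
      unfolding G_def by (rule G_quad, insert ud wd that Fd[OF that], auto)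
    ultimately show ?thesis using uF[OF that] by simp
  qed
  have pars: "(\<Sum>j<C i. \<Sum>k<m. (cmod (cinner (w i k) (F i j)))^2) = (\<Sum>k<m. Re (cinner (w i k) (w i k)))"
    if i: "i < N" for i
  proof -
    have "(\<Sum>j<C i. \<Sum>k<m. (cmod (cinner (w i k) (F i j)))^2) = (\<Sum>k<m. \<Sum>j<C i. (cmod (cinner (F i j) (w i k)))^2)"
    proof (subst sum.swap, intro sum.cong refl)
      fix k j assume "k \<in> {..<m}" "j \<in> {..<C i}"
      then have "cinner (w i k) (F i j) = cnj (cinner (F i j) (w i k))"
        using Fd[OF i] wd i by (intro cinner_swap, auto)
      then show "(cmod (cinner (w i k) (F i j)))^2 = (cmod (cinner (F i j) (w i k)))^2" by simp
    qed
    also have "\<dots> = (\<Sum>k<m. Re (cinner (w i k) (w i k)))"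
    proof (intro sum.cong refl)
      fix k assume k: "k \<in> {..<m}"
      show "(\<Sum>j<C i. (cmod (cinner (F i j) (w i k)))^2) = Re (cinner (w i k) (w i k))"
        by (rule parseval[symmetric], insert Fd[OF i] wd i k Fs[OF i], auto)
    qed
    finally show ?thesis .
  qed
  have "1 + (\<Sum>i<N. \<Sum>k<m. Re (cinner (w i k) (w i k))) = 1 + (\<Sum>i<N. \<Sum>j<C i. \<Sum>k<m. (cmod (cinner (w i k) (F i j)))^2)"
    using pars by simp
  also have "\<dots> \<le> Re (cinner u (H *\<^sub>v u)) + (\<Sum>i<N. \<Sum>j<C i. Re (cinner (F i j) (H *\<^sub>v F i j)))"
    by (intro add_mono lu sum_mono lF, auto)
  also have "\<dots> = Re (\<Sum>s\<in>S. cinner (g s) (H *\<^sub>v g s))" unfolding sumS by (simp add: Re_sum)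
  also have "\<dots> \<le> Re (mtrace H)" by (rule bes)
  finally show ?thesis .
qed



lemma qc_carrier: "quantum_channel d \<Phi> \<Longrightarrow> A \<in> carrier_mat d d \<Longrightarrow> \<Phi> A \<in> carrier_mat d d"
  by (simp add: quantum_channel_def)
lemma qc_add: "quantum_channel d \<Phi> \<Longrightarrow> A \<in> carrier_mat d d \<Longrightarrow> B \<in> carrier_mat d d \<Longrightarrow> \<Phi> (A + B) = \<Phi> A + \<Phi> B"
  by (simp add: quantum_channel_def)
lemma qc_smult: "quantum_channel d \<Phi> \<Longrightarrow> A \<in> carrier_mat d d \<Longrightarrow> \<Phi> (c \<cdot>\<^sub>m A) = c \<cdot>\<^sub>m \<Phi> A"
  by (simp add: quantum_channel_def)
lemma qc_trace: "quantum_channel d \<Phi> \<Longrightarrow> A \<in> carrier_mat d d \<Longrightarrow> mtrace (\<Phi> A) = mtrace A"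
  by (simp add: quantum_channel_def)
lemma qc_cp: "quantum_channel d \<Phi> \<Longrightarrow> psd_mat (d * k) X \<Longrightarrow> psd_mat (d * k) (ampl d k \<Phi> X)"
  by (simp add: quantum_channel_def)

lemma mat_self: "X \<in> carrier_mat d d \<Longrightarrow> mat d d (\<lambda>(i,j). X $$ (i,j)) = X"
  by (intro eq_matI, auto)

lemma qc_pos: assumes "quantum_channel d \<Phi>" "psd_mat d X" shows "psd_mat d (\<Phi> X)"
proof -
  have Xc: "X \<in> carrier_mat d d" using assms(2) by (simp add: psd_mat_def)
  have PXc: "\<Phi> X \<in> carrier_mat d d" by (rule qc_carrier[OF assms(1) Xc])
  have "ampl d 1 \<Phi> X = \<Phi> X"
  proof -
    have "ampl d 1 \<Phi> X = mat d d (\<lambda>(a,b). \<Phi> (mat d d (\<lambda>(i,j). X $$ (i,j))) $$ (a,b))"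
      unfolding ampl_def by simp
    also have "\<dots> = \<Phi> X" unfolding mat_self[OF Xc] using PXc by (intro eq_matI, auto)
    finally show ?thesis .
  qed
  moreover have "psd_mat (d * 1) (ampl d 1 \<Phi> X)" by (rule qc_cp[OF assms(1)], insert assms(2), simp)
  ultimately show ?thesis by simp
qed

lemma qc_lin: assumes qc: "quantum_channel d \<Phi>" and S: "finite S" and M: "\<forall>s\<in>S. M s \<in> carrier_mat d d"
  shows "\<Phi> (mat d d (\<lambda>ij. \<Sum>s\<in>S. c s * M s $$ ij)) = mat d d (\<lambda>ij. \<Sum>s\<in>S. c s * \<Phi> (M s) $$ ij)"
  using S M
proof (induction S rule: finite_induct)
  case empty
  have "mat d d (\<lambda>ij. \<Sum>s\<in>{}. c s * M s $$ ij) = 0 \<cdot>\<^sub>m (0\<^sub>m d d :: complex mat)"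
    by (intro eq_matI, auto)
  then have "\<Phi> (mat d d (\<lambda>ij. \<Sum>s\<in>{}. c s * M s $$ ij)) = 0 \<cdot>\<^sub>m \<Phi> (0\<^sub>m d d)"
    using qc_smult[OF qc, of "0\<^sub>m d d" 0] by simp
  also have "\<dots> = mat d d (\<lambda>ij. \<Sum>s\<in>{}. c s * \<Phi> (M s) $$ ij)"
    using qc_carrier[OF qc, of "0\<^sub>m d d"] by (intro eq_matI, auto)
  finally show ?case .
next
  case (insert x F)
  have Mx: "M x \<in> carrier_mat d d" using insert by auto
  have eq: "mat d d (\<lambda>ij. \<Sum>s\<in>insert x F. c s * M s $$ ij) = c x \<cdot>\<^sub>m M x + mat d d (\<lambda>ij. \<Sum>s\<in>F. c s * M s $$ ij)"
    using insert Mx by (intro eq_matI, auto)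
  have "\<Phi> (mat d d (\<lambda>ij. \<Sum>s\<in>insert x F. c s * M s $$ ij)) = c x \<cdot>\<^sub>m \<Phi> (M x) + \<Phi> (mat d d (\<lambda>ij. \<Sum>s\<in>F. c s * M s $$ ij))"
    unfolding eq using Mx by (simp add: qc_add[OF qc] qc_smult[OF qc])
  also have "\<Phi> (mat d d (\<lambda>ij. \<Sum>s\<in>F. c s * M s $$ ij)) = mat d d (\<lambda>ij. \<Sum>s\<in>F. c s * \<Phi> (M s) $$ ij)"
    using insert by auto
  also have "c x \<cdot>\<^sub>m \<Phi> (M x) + mat d d (\<lambda>ij. \<Sum>s\<in>F. c s * \<Phi> (M s) $$ ij) = mat d d (\<lambda>ij. \<Sum>s\<in>insert x F. c s * \<Phi> (M s) $$ ij)"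
    using insert qc_carrier[OF qc Mx] by (intro eq_matI, auto)
  finally show ?case .
qed

lemma ketbra_rk: "dim_vec x = d \<Longrightarrow> ketbra x = rk d 1 (\<lambda>_. x)"
  by (intro eq_matI, auto simp: ketbra_def)

lemma hs_ketbra: assumes "dim_vec e = d" "M \<in> carrier_mat d d"
  shows "hs_inner (ketbra e) M = cinner e (M *\<^sub>v e)"
proof -
  have "hs_inner (ketbra e) M = (\<Sum>i<d. \<Sum>j<d. cnj (e $ j) * e $ i * M $$ (j, i))"
    unfolding hs_inner_def mtrace_def using assms
    by (simp add: mat_adj_def ketbra_def scalar_prod_def atLeast0LessThan row_def col_def)
  also have "\<dots> = (\<Sum>j<d. \<Sum>i<d. cnj (e $ j) * M $$ (j, i) * e $ i)"
    by (subst sum.swap, simp add: mult_ac)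
  also have "\<dots> = cinner e (M *\<^sub>v e)" using assms by (simp add: quad_expand)
  finally show ?thesis .
qed

lemma quad_lin: assumes "dim_vec x = n" "finite S" "\<forall>s\<in>S. F s \<in> carrier_mat n n"
  shows "cinner x (mat n n (\<lambda>ij. \<Sum>s\<in>S. c s * F s $$ ij) *\<^sub>v x) = (\<Sum>s\<in>S. c s * cinner x (F s *\<^sub>v x))"
proof -
  have "cinner x (mat n n (\<lambda>ij. \<Sum>s\<in>S. c s * F s $$ ij) *\<^sub>v x) = (\<Sum>i<n. \<Sum>j<n. \<Sum>s\<in>S. c s * (cnj (x $ i) * F s $$ (i,j) * x $ j))"
    by (subst quad_expand[OF _ assms(1)], auto simp: sum_distrib_left sum_distrib_right mult_ac)
  also have "\<dots> = (\<Sum>s\<in>S. \<Sum>i<n. \<Sum>j<n. c s * (cnj (x $ i) * F s $$ (i,j) * x $ j))" by (rule sum3_swap)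
  also have "\<dots> = (\<Sum>s\<in>S. c s * cinner x (F s *\<^sub>v x))"
  proof (intro sum.cong refl)
    fix s assume "s \<in> S"
    then show "(\<Sum>i<n. \<Sum>j<n. c s * (cnj (x $ i) * F s $$ (i,j) * x $ j)) = c s * cinner x (F s *\<^sub>v x)"
      using assms by (subst quad_expand[of _ n], auto simp: sum_distrib_left)
  qed
  finally show ?thesis .
qed

definition "Emat d a b = unit_mat_ij d a b"

lemma ketbra_lin: assumes "dim_vec x = d"
  shows "ketbra x = mat d d (\<lambda>ij. \<Sum>s\<in>{..<d}\<times>{..<d}. (x $ fst s * cnj (x $ snd s)) * unit_mat_ij d (fst s) (snd s) $$ ij)"
proof (intro eq_matI)
  fix i j assume ij: "i < dim_row (mat d d (\<lambda>ij. \<Sum>s\<in>{..<d}\<times>{..<d}. (x $ fst s * cnj (x $ snd s)) * unit_mat_ij d (fst s) (snd s) $$ ij))"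
    "j < dim_col (mat d d (\<lambda>ij. \<Sum>s\<in>{..<d}\<times>{..<d}. (x $ fst s * cnj (x $ snd s)) * unit_mat_ij d (fst s) (snd s) $$ ij))"
  then have ij: "i < d" "j < d" by auto
  have "(\<Sum>s\<in>{..<d}\<times>{..<d}. (x $ fst s * cnj (x $ snd s)) * unit_mat_ij d (fst s) (snd s) $$ (i,j))
     = (\<Sum>s\<in>{..<d}\<times>{..<d}. if s = (i,j) then x $ i * cnj (x $ j) else 0)"
    using ij by (intro sum.cong refl, auto simp: unit_mat_ij_def)
  also have "\<dots> = x $ i * cnj (x $ j)" using ij by (simp add: sum.delta)
  finally show "ketbra x $$ (i,j) = mat d d (\<lambda>ij. \<Sum>s\<in>{..<d}\<times>{..<d}. (x $ fst s * cnj (x $ snd s)) * unit_mat_ij d (fst s) (snd s) $$ ij) $$ (i,j)"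
    using ij assms by (simp add: ketbra_def)
qed (auto simp: ketbra_def assms)

lemma chan_adj_index: assumes "dim_vec e = d" "quantum_channel d \<Phi>" "a < d" "b < d"
  shows "chan_adj d \<Phi> (ketbra e) $$ (a,b) = cnj (cinner e (\<Phi> (unit_mat_ij d a b) *\<^sub>v e))"
proof -
  have "unit_mat_ij d a b \<in> carrier_mat d d" by (simp add: unit_mat_ij_def)
  then show ?thesis using assms by (simp add: chan_adj_def hs_ketbra qc_carrier)
qed

lemma chan_adj_psd: assumes qc: "quantum_channel d \<Phi>" and e: "dim_vec e = d"
  shows "psd_mat d (chan_adj d \<Phi> (ketbra e))"
  unfolding psd_mat_def
proof (intro conjI ballI)
  show "chan_adj d \<Phi> (ketbra e) \<in> carrier_mat d d" by (simp add: chan_adj_def)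
  fix x :: "complex vec" assume x: "x \<in> carrier_vec d"
  let ?S = "{..<d}\<times>{..<d}"
  let ?c = "\<lambda>s. x $ fst s * cnj (x $ snd s)"
  have Ec: "\<forall>s\<in>?S. unit_mat_ij d (fst s) (snd s) \<in> carrier_mat d d" by (simp add: unit_mat_ij_def)
  have PEc: "\<forall>s\<in>?S. \<Phi> (unit_mat_ij d (fst s) (snd s)) \<in> carrier_mat d d" using Ec qc_carrier[OF qc] by auto
  have xd: "dim_vec x = d" using x by simp
  have "cinner x (chan_adj d \<Phi> (ketbra e) *\<^sub>v x) = (\<Sum>a<d. \<Sum>b<d. cnj (x $ a) * chan_adj d \<Phi> (ketbra e) $$ (a,b) * x $ b)"
    by (rule quad_expand[OF _ xd], simp add: chan_adj_def)
  also have "\<dots> = (\<Sum>a<d. \<Sum>b<d. cnj (?c (a,b) * cinner e (\<Phi> (unit_mat_ij d a b) *\<^sub>v e)))"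
  proof (intro sum.cong refl)
    fix a b assume ab: "a \<in> {..<d}" "b \<in> {..<d}"
    have h: "chan_adj d \<Phi> (ketbra e) $$ (a,b) = cnj (cinner e (\<Phi> (unit_mat_ij d a b) *\<^sub>v e))"
      using ab by (intro chan_adj_index[OF e qc], auto)
    show "cnj (x $ a) * chan_adj d \<Phi> (ketbra e) $$ (a,b) * x $ b = cnj (?c (a,b) * cinner e (\<Phi> (unit_mat_ij d a b) *\<^sub>v e))"
      unfolding h by (simp only: complex_cnj_mult complex_cnj_cnj fst_conv snd_conv mult_ac)
  qed
  also have "\<dots> = cnj (\<Sum>s\<in>?S. ?c s * cinner e (\<Phi> (unit_mat_ij d (fst s) (snd s)) *\<^sub>v e))"
    by (simp add: cnj_sum sum.cartesian_product case_prod_beta)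
  also have "(\<Sum>s\<in>?S. ?c s * cinner e (\<Phi> (unit_mat_ij d (fst s) (snd s)) *\<^sub>v e))
     = cinner e (mat d d (\<lambda>ij. \<Sum>s\<in>?S. ?c s * \<Phi> (unit_mat_ij d (fst s) (snd s)) $$ ij) *\<^sub>v e)"
    by (rule quad_lin[symmetric, OF e _ PEc], simp)
  also have "mat d d (\<lambda>ij. \<Sum>s\<in>?S. ?c s * \<Phi> (unit_mat_ij d (fst s) (snd s)) $$ ij) = \<Phi> (ketbra x)"
    unfolding ketbra_lin[OF xd] by (rule qc_lin[symmetric, OF qc _ Ec], simp)
  finally have eq: "cinner x (chan_adj d \<Phi> (ketbra e) *\<^sub>v x) = cnj (cinner e (\<Phi> (ketbra x) *\<^sub>v e))" .
  have "psd_mat d (ketbra x)" unfolding ketbra_rk[OF xd] by (rule rk_psd, simp add: xd)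
  then have "psd_mat d (\<Phi> (ketbra x))" by (rule qc_pos[OF qc])
  then have "cinner e (\<Phi> (ketbra x) *\<^sub>v e) \<in> \<real> \<and> 0 \<le> Re (cinner e (\<Phi> (ketbra x) *\<^sub>v e))"
    using psd_quadD[OF _ carrier_vecI[OF e]] by blast
  then show "cinner x (chan_adj d \<Phi> (ketbra e) *\<^sub>v x) \<in> \<real>" "0 \<le> Re (cinner x (chan_adj d \<Phi> (ketbra e) *\<^sub>v x))"
    unfolding eq by (auto simp: complex_is_Real_iff)
qed



lemma onb_complete: assumes "onb d e" "i < d" "j < d"
  shows "(\<Sum>k<d. e k $ i * cnj (e k $ j)) = (if i = j then 1 else 0)"
proof -
  define E where "E = mat d d (\<lambda>(i,k). e k $ i)"
  define A where "A = mat_adj E"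
  have Ec: "E \<in> carrier_mat d d" by (simp add: E_def)
  have Ac: "A \<in> carrier_mat d d" by (simp add: A_def E_def mat_adj_def)
  have ed: "\<And>k. k < d \<Longrightarrow> dim_vec (e k) = d" using assms(1) unfolding onb_def by auto
  have eo: "\<And>k l. k < d \<Longrightarrow> l < d \<Longrightarrow> cinner (e k) (e l) = (if k = l then 1 else 0)"
    using assms(1) unfolding onb_def by auto
  have AE: "A * E = 1\<^sub>m d"
  proof (intro eq_matI)
    fix k l assume kl: "k < dim_row (1\<^sub>m d :: complex mat)" "l < dim_col (1\<^sub>m d :: complex mat)"
    then have kl: "k < d" "l < d" by auto
    have "(A * E) $$ (k,l) = (\<Sum>i<d. cnj (e k $ i) * e l $ i)"
      using kl Ac Ec by (simp add: A_def E_def mat_adj_def scalar_prod_def atLeast0LessThan row_def col_def)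
    also have "\<dots> = cinner (e k) (e l)" using ed[OF kl(1)] by (simp add: cinner_def)
    also have "\<dots> = 1\<^sub>m d $$ (k,l)" using eo[OF kl] kl by simp
    finally show "(A * E) $$ (k,l) = 1\<^sub>m d $$ (k,l)" .
  qed (use Ac Ec in auto)
  have EA: "E * A = 1\<^sub>m d" by (rule mat_mult_left_right_inverse[OF Ac Ec AE])
  have "(E * A) $$ (i,j) = (\<Sum>k<d. e k $ i * cnj (e k $ j))"
    using assms(2,3) Ac Ec by (simp add: A_def E_def mat_adj_def scalar_prod_def atLeast0LessThan row_def col_def)
  then show ?thesis using EA assms(2,3) by simp
qed

lemma onb_trace: assumes "onb d e" "M \<in> carrier_mat d d"
  shows "(\<Sum>k<d. cinner (e k) (M *\<^sub>v e k)) = mtrace M"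
proof -
  have ed: "\<And>k. k < d \<Longrightarrow> dim_vec (e k) = d" using assms(1) unfolding onb_def by auto
  have "(\<Sum>k<d. cinner (e k) (M *\<^sub>v e k)) = (\<Sum>k<d. \<Sum>i<d. \<Sum>j<d. M $$ (i,j) * (e k $ j * cnj (e k $ i)))"
    using ed by (intro sum.cong refl, subst quad_expand[OF assms(2)], auto simp: mult_ac)
  also have "\<dots> = (\<Sum>i<d. \<Sum>j<d. \<Sum>k<d. M $$ (i,j) * (e k $ j * cnj (e k $ i)))"
    by (rule sum3_swap[symmetric])
  also have "\<dots> = (\<Sum>i<d. \<Sum>j<d. if j = i then M $$ (i,j) else 0)"
  proof (intro sum.cong refl)
    fix i j assume "i \<in> {..<d}" "j \<in> {..<d}"
    then show "(\<Sum>k<d. M $$ (i,j) * (e k $ j * cnj (e k $ i))) = (if j = i then M $$ (i,j) else 0)"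
      using onb_complete[OF assms(1), of j i] by (simp add: sum_distrib_left[symmetric])
  qed
  also have "\<dots> = mtrace M" using assms(2) unfolding mtrace_def by simp
  finally show ?thesis .
qed

lemma trace_unit: "a < d \<Longrightarrow> b < d \<Longrightarrow> mtrace (unit_mat_ij d a b) = (if a = b then 1 else 0)"
proof -
  assume ab: "a < d" "b < d"
  have "mtrace (unit_mat_ij d a b) = (\<Sum>i<d. if i = a \<and> i = b then 1 else 0)" by (simp add: mtrace_def unit_mat_ij_def)
  also have "\<dots> = (\<Sum>i<d. if i = a then (if a = b then 1 else 0) else 0)" by (intro sum.cong refl, auto)
  also have "\<dots> = (if a = b then 1 else 0)" using ab by simp
  finally show ?thesis .
qed

lemma Psum: assumes qc: "quantum_channel d \<Phi>" and o: "onb d e" and ab: "a < d" "b < d"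
  shows "(\<Sum>k<d. chan_adj d \<Phi> (ketbra (e k)) $$ (a,b)) = (if a = b then 1 else 0)"
proof -
  have ed: "\<And>k. k < d \<Longrightarrow> dim_vec (e k) = d" using o unfolding onb_def by auto
  have Uc: "unit_mat_ij d a b \<in> carrier_mat d d" by (simp add: unit_mat_ij_def)
  have "(\<Sum>k<d. chan_adj d \<Phi> (ketbra (e k)) $$ (a,b)) = (\<Sum>k<d. cnj (cinner (e k) (\<Phi> (unit_mat_ij d a b) *\<^sub>v e k)))"
    by (intro sum.cong refl, rule chan_adj_index[OF ed qc ab], auto)
  also have "\<dots> = cnj (mtrace (\<Phi> (unit_mat_ij d a b)))"
    by (simp only: cnj_sum[symmetric] onb_trace[OF o qc_carrier[OF qc Uc]])
  also have "\<dots> = (if a = b then 1 else 0)" using qc_trace[OF qc Uc] trace_unit[OF ab] by simp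
  finally show ?thesis .
qed



lemma divmod_small: "j < d \<Longrightarrow> (i * d + j) div d = i" "j < d \<Longrightarrow> (i * d + j) mod d = (j::nat)"
  by auto

lemma idx_bound: "i < d \<Longrightarrow> j < d \<Longrightarrow> i * d + j < d * (d::nat)"
proof -
  assume a: "i < d" "j < d"
  have "i * d + j < i * d + d" using a by simp
  also have "\<dots> = (i + 1) * d" by simp
  also have "\<dots> \<le> d * d" using a by (intro mult_right_mono, auto)
  finally show ?thesis .
qed

lemma sum_sq: fixes d :: nat shows "(\<Sum>a<d*d. f a) = (\<Sum>i<d. \<Sum>j<d. f (i * d + j))"
proof -
  have bij: "bij_betw (\<lambda>(i,j). i * d + j) ({..<d} \<times> {..<d}) {..<d*d}"
  proof (rule bij_betw_byWitness[where f' = "\<lambda>a. (a div d, a mod d)"])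
    show "\<forall>a\<in>{..<d}\<times>{..<d}. (\<lambda>a. (a div d, a mod d)) ((\<lambda>(i,j). i * d + j) a) = a" by auto
    show "\<forall>a'\<in>{..<d*d}. (\<lambda>(i,j). i * d + j) ((\<lambda>a. (a div d, a mod d)) a') = a'" by auto
    show "(\<lambda>(i,j). i * d + j) ` ({..<d} \<times> {..<d}) \<subseteq> {..<d*d}"
    proof
      fix x assume "x \<in> (\<lambda>(i,j). i * d + j) ` ({..<d} \<times> {..<d})"
      then obtain i j where x: "x = i * d + j" "i < d" "j < d" by auto
      have "i * d + j < i * d + d" using x by simp
      also have "\<dots> = (i + 1) * d" by simp
      also have "\<dots> \<le> d * d" using x by (intro mult_right_mono, auto)
      finally show "x \<in> {..<d*d}" using x by simp
    qed
    show "(\<lambda>a. (a div d, a mod d)) ` {..<d*d} \<subseteq> {..<d} \<times> {..<d}"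
    proof
      fix y assume "y \<in> (\<lambda>a. (a div d, a mod d)) ` {..<d*d}"
      then obtain a where a: "y = (a div d, a mod d)" "a < d * d" by auto
      then have "d > 0" by (cases d, auto)
      then show "y \<in> {..<d} \<times> {..<d}" using a by (auto simp: div_less_iff_less_mult)
    qed
  qed
  have "(\<Sum>a<d*d. f a) = (\<Sum>x\<in>{..<d} \<times> {..<d}. f ((\<lambda>(i,j). i * d + j) x))"
    by (rule sum.reindex_bij_betw[OF bij, symmetric])
  also have "\<dots> = (\<Sum>i<d. \<Sum>j<d. f (i * d + j))" by (simp add: sum.cartesian_product case_prod_beta)
  finally show ?thesis .
qed

lemma divmod_lt: "a < d * d \<Longrightarrow> a div d < (d::nat)" "a < d * d \<Longrightarrow> a mod d < d"
proof -
  assume a: "a < d * d"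
  then have "d > 0" by (cases d, auto)
  then show "a div d < d" "a mod d < d" using a by (auto simp: div_less_iff_less_mult)
qed

lemma vecX_index: "a < d * d \<Longrightarrow> vecX d X $ a = X $$ (a div d, a mod d)"
  by (simp add: vecX_def)
lemma vecX_dim[simp]: "dim_vec (vecX d X) = d * d"
  by (simp add: vecX_def)

lemma cinner_vecX: "cinner (vecX d X) (vecX d Y) = (\<Sum>i<d. \<Sum>j<d. cnj (X $$ (i,j)) * Y $$ (i,j))"
  unfolding cinner_def vecX_dim by (subst sum_sq, intro sum.cong refl, simp add: vecX_index idx_bound)

definition "u0 d = vecX d (1\<^sub>m d)"

lemma u0_index: "a < d * d \<Longrightarrow> u0 d $ a = (if a div d = a mod d then 1 else 0)"
proof -
  assume a: "a < d * d"
  then have "d > 0" by (cases d, auto)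
  then have "a div d < d" "a mod d < d" using a by (auto simp: div_less_iff_less_mult)
  then show ?thesis using a by (simp add: u0_def vecX_index)
qed

lemma u0_real: "a < d * d \<Longrightarrow> cnj (u0 d $ a) = u0 d $ a"
  by (simp add: u0_index)

lemma cinner_vecX_u0: assumes "X \<in> carrier_mat d d" shows "cinner (vecX d X) (u0 d) = cnj (mtrace X)"
proof -
  have "cinner (vecX d X) (u0 d) = (\<Sum>i<d. \<Sum>j<d. cnj (X $$ (i,j)) * 1\<^sub>m d $$ (i,j))"
    unfolding u0_def by (rule cinner_vecX)
  also have "\<dots> = (\<Sum>i<d. \<Sum>j<d. if i = j then cnj (X $$ (i,j)) else 0)" by (intro sum.cong refl, auto)
  also have "\<dots> = cnj (mtrace X)" using assms by (simp add: mtrace_def cnj_sum)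
  finally show ?thesis .
qed

lemma cinner_u0_u0: "cinner (u0 d) (u0 d) = of_nat d"
proof -
  have "cinner (u0 d) (u0 d) = cnj (mtrace (1\<^sub>m d :: complex mat))"
    by (subst (1) u0_def, rule cinner_vecX_u0, simp)
  also have "mtrace (1\<^sub>m d :: complex mat) = of_nat d" by (simp add: mtrace_def)
  finally show ?thesis by simp
qed


definition "Pk d \<Phi> e k = chan_adj d \<Phi> (ketbra (e k))"
definition "tk d \<Phi> e k = mtrace (Pk d \<Phi> e k)"
definition "uv d = vec (d*d) (\<lambda>a. u0 d $ a / complex_of_real (sqrt (real d)))"
definition "wv d \<Phi> e k = vec (d*d) (\<lambda>a. (vecX d (Pk d \<Phi> e k) $ a - tk d \<Phi> e k / of_nat d * u0 d $ a)
   / complex_of_real (sqrt (Re (tk d \<Phi> e k))))"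

lemma Pk_carrier: "Pk d \<Phi> e k \<in> carrier_mat d d"
  by (simp add: Pk_def chan_adj_def)

lemma Pk_dim[simp]: "dim_row (Pk d \<Phi> e k) = d" "dim_col (Pk d \<Phi> e k) = d"
  by (simp_all add: Pk_def chan_adj_def)

lemma onb_dim: "onb d e \<Longrightarrow> k < d \<Longrightarrow> dim_vec (e k) = d"
  unfolding onb_def by auto

lemma Pk_psd: "quantum_channel d \<Phi> \<Longrightarrow> onb d e \<Longrightarrow> k < d \<Longrightarrow> psd_mat d (Pk d \<Phi> e k)"
  unfolding Pk_def by (rule chan_adj_psd, auto simp: onb_dim)

lemma tk_real: assumes "quantum_channel d \<Phi>" "onb d e" "k < d"
  shows "tk d \<Phi> e k = of_real (Re (tk d \<Phi> e k))" "Re (tk d \<Phi> e k) \<ge> 0"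
proof -
  have P: "psd_mat d (Pk d \<Phi> e k)" by (rule Pk_psd[OF assms])
  have "Im (tk d \<Phi> e k) = (\<Sum>j<d. Im (Pk d \<Phi> e k $$ (j,j)))"
    using Pk_carrier by (simp add: tk_def mtrace_def Im_sum)
  also have "\<dots> = 0" using psd_diag(1)[OF P] by (intro sum.neutral, auto simp: complex_is_Real_iff)
  finally show "tk d \<Phi> e k = of_real (Re (tk d \<Phi> e k))" by (simp add: complex_eq_iff)
  have "Re (tk d \<Phi> e k) = (\<Sum>j<d. Re (Pk d \<Phi> e k $$ (j,j)))"
    using Pk_carrier by (simp add: tk_def mtrace_def Re_sum)
  also have "\<dots> \<ge> 0" using psd_diag(2)[OF P] by (intro sum_nonneg, auto)
  finally show "Re (tk d \<Phi> e k) \<ge> 0" .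
qed

lemma tk_zero: assumes "quantum_channel d \<Phi>" "onb d e" "k < d" "tk d \<Phi> e k = 0"
  shows "Pk d \<Phi> e k = 0\<^sub>m d d"
  by (rule psd_zero_trace[OF Pk_psd[OF assms(1-3)]], insert assms(4), simp add: tk_def)

lemma Pk_sum: assumes "quantum_channel d \<Phi>" "onb d e" "a < d" "b < d"
  shows "(\<Sum>k<d. Pk d \<Phi> e k $$ (a,b)) = (if a = b then 1 else 0)"
  unfolding Pk_def by (rule Psum[OF assms])

lemma tk_sum: assumes "quantum_channel d \<Phi>" "onb d e"
  shows "(\<Sum>k<d. tk d \<Phi> e k) = of_nat d"
proof -
  have "(\<Sum>k<d. tk d \<Phi> e k) = (\<Sum>k<d. \<Sum>j<d. Pk d \<Phi> e k $$ (j,j))"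
    using Pk_carrier by (simp add: tk_def mtrace_def)
  also have "\<dots> = (\<Sum>j<d. \<Sum>k<d. Pk d \<Phi> e k $$ (j,j))" by (rule sum.swap)
  also have "\<dots> = (\<Sum>j<d. 1)" by (intro sum.cong refl, simp add: Pk_sum[OF assms])
  finally show ?thesis by simp
qed

lemma pk_sum: assumes "quantum_channel d \<Phi>" "onb d e" "a < d * d"
  shows "(\<Sum>k<d. vecX d (Pk d \<Phi> e k) $ a) = u0 d $ a"
proof -
  have "d > 0" using assms(3) by (cases d, auto)
  then have ab: "a div d < d" "a mod d < d" using assms(3) by (auto simp: div_less_iff_less_mult)
  show ?thesis using assms(3) by (simp add: vecX_index u0_index Pk_sum[OF assms(1,2) ab])
qed

lemma uv_dim[simp]: "dim_vec (uv d) = d * d" by (simp add: uv_def)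
lemma wv_dim[simp]: "dim_vec (wv d \<Phi> e k) = d * d" by (simp add: wv_def)

lemma uv_uv: assumes "d \<ge> 1" shows "cinner (uv d) (uv d) = 1"
proof -
  let ?s = "complex_of_real (sqrt (real d))"
  have ss: "?s * ?s = of_nat d" by (simp flip: of_real_mult)
  have s0: "?s \<noteq> 0" using assms by simp
  have "cinner (uv d) (uv d) = (\<Sum>a<d*d. cnj (u0 d $ a) * u0 d $ a) / (?s * ?s)"
    unfolding cinner_def uv_dim by (simp add: uv_def sum_divide_distrib)
  also have "(\<Sum>a<d*d. cnj (u0 d $ a) * u0 d $ a) = of_nat d"
    using cinner_u0_u0[of d] by (simp add: cinner_def u0_def)
  finally show ?thesis using ss s0 assms by simp
qed

lemma omega_rk: assumes "d \<ge> 1" shows "omega d = rk (d*d) 1 (\<lambda>_. uv d)"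
proof (intro eq_matI)
  fix a b assume "a < dim_row (rk (d*d) 1 (\<lambda>_. uv d))" "b < dim_col (rk (d*d) 1 (\<lambda>_. uv d))"
  then have ab: "a < d * d" "b < d * d" by auto
  let ?s = "complex_of_real (sqrt (real d))"
  have ss: "?s * ?s = of_nat d" by (simp flip: of_real_mult)
  have s0: "?s \<noteq> 0" using assms by simp
  have "rk (d*d) 1 (\<lambda>_. uv d) $$ (a,b) = u0 d $ a * u0 d $ b / (?s * ?s)"
    using ab by (simp add: uv_def u0_real)
  also have "\<dots> = omega d $$ (a,b)" unfolding ss using ab by (simp add: omega_def u0_index)
  finally show "omega d $$ (a,b) = rk (d*d) 1 (\<lambda>_. uv d) $$ (a,b)" by simp
qed (auto simp: omega_def)


lemma ketbra_index: "a < dim_vec v \<Longrightarrow> b < dim_vec v \<Longrightarrow> ketbra v $$ (a,b) = v $ a * cnj (v $ b)"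
  by (simp add: ketbra_def)

lemma cnj_ofreal_sqrt: "cnj (complex_of_real x) = complex_of_real x" by simp

lemma wv_uv: assumes qc: "quantum_channel d \<Phi>" and o: "onb d e" and d: "d \<ge> 1" and k: "k < d"
  shows "cinner (wv d \<Phi> e k) (uv d) = 0"
proof -
  let ?p = "vecX d (Pk d \<Phi> e k)" and ?t = "tk d \<Phi> e k" and ?D = "of_nat d :: complex"
  let ?\<sigma> = "complex_of_real (sqrt (Re (tk d \<Phi> e k)))" and ?s = "complex_of_real (sqrt (real d))"
  have tm: "cnj ((?p $ a - ?t / ?D * u0 d $ a) / ?\<sigma>) * (u0 d $ a / ?s)
      = (cnj (?p $ a) * u0 d $ a - cnj ?t / ?D * (cnj (u0 d $ a) * u0 d $ a)) / (?\<sigma> * ?s)" if "a < d * d" for a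
  proof -
    have "cnj ((?p $ a - ?t / ?D * u0 d $ a) / ?\<sigma>) * (u0 d $ a / ?s) = cnj (?p $ a - ?t / ?D * u0 d $ a) * u0 d $ a / (?\<sigma> * ?s)"
      by (simp only: complex_cnj_divide cnj_ofreal_sqrt times_divide_times_eq)
    also have "cnj (?p $ a - ?t / ?D * u0 d $ a) * u0 d $ a = cnj (?p $ a) * u0 d $ a - cnj ?t / ?D * (cnj (u0 d $ a) * u0 d $ a)"
      by (simp add: algebra_simps)
    finally show ?thesis .
  qed
  have "cinner (wv d \<Phi> e k) (uv d) = (\<Sum>a<d*d. (cnj (?p $ a) * u0 d $ a - cnj ?t / ?D * (cnj (u0 d $ a) * u0 d $ a)) / (?\<sigma> * ?s))"
    unfolding cinner_def wv_dim by (intro sum.cong refl, simp only: wv_def uv_def index_vec lessThan_iff tm)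
  also have "\<dots> = (cinner ?p (u0 d) - cnj ?t / ?D * cinner (u0 d) (u0 d)) / (?\<sigma> * ?s)"
    by (simp add: sum_divide_distrib[symmetric] sum_subtractf sum_distrib_left cinner_def u0_def)
  also have "cinner ?p (u0 d) = cnj ?t" unfolding tk_def by (rule cinner_vecX_u0[OF Pk_carrier])
  also have "cinner (u0 d) (u0 d) = ?D" by (rule cinner_u0_u0)
  finally show ?thesis using d by simp
qed

lemma alg: fixes pa pb ua ub t D :: complex and r :: real
  assumes "t = of_real r" "r > 0" "cnj ub = ub" "D \<noteq> 0" "cnj D = D"
  shows "pa * cnj pb / t = (pa - t/D*ua) / of_real (sqrt r) * cnj ((pb - t/D*ub) / of_real (sqrt r)) + pa*ub/D + ua*cnj pb/D - t*ua*ub/(D*D)"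
proof -
  have ss: "complex_of_real (sqrt r) * complex_of_real (sqrt r) = t" using assms(1,2) by (simp flip: of_real_mult)
  have s0: "complex_of_real (sqrt r) \<noteq> 0" using assms(2) by simp
  have t0: "t \<noteq> 0" using assms(1,2) by simp
  have ct: "cnj t = t" using assms(1) by simp
  let ?s = "complex_of_real (sqrt r)"
  have c: "cnj ((pb - t/D*ub) / ?s) = (cnj pb - t/D*ub) / ?s"
    using assms(3,5) ct by (simp only: complex_cnj_divide complex_cnj_diff complex_cnj_mult cnj_ofreal_sqrt)
  have "(pa - t/D*ua) / ?s * cnj ((pb - t/D*ub) / ?s) = (pa - t/D*ua) * (cnj pb - t/D*ub) / (?s * ?s)"
    unfolding c by (rule times_divide_times_eq)
  also have "\<dots> = (pa - t/D*ua) * (cnj pb - t/D*ub) / t" unfolding ss ..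
  finally have e: "(pa - t/D*ua) / ?s * cnj ((pb - t/D*ub) / ?s) = (pa - t/D*ua) * (cnj pb - t/D*ub) / t" .
  show ?thesis unfolding e using t0 assms(4) by (simp add: field_simps)
qed

lemma G_decomp: assumes qc: "quantum_channel d \<Phi>" and o: "onb d e" and d: "d \<ge> 1"
  shows "Gmat d \<Phi> e = rk (d*d) 1 (\<lambda>_. uv d) + rk (d*d) d (wv d \<Phi> e)"
proof (intro eq_matI)
  fix a b assume "a < dim_row (rk (d*d) 1 (\<lambda>_. uv d) + rk (d*d) d (wv d \<Phi> e))"
    "b < dim_col (rk (d*d) 1 (\<lambda>_. uv d) + rk (d*d) d (wv d \<Phi> e))"
  then have ab: "a < d * d" "b < d * d" by auto
  let ?D = "of_nat d :: complex"
  let ?p = "\<lambda>k. vecX d (Pk d \<Phi> e k)" and ?t = "tk d \<Phi> e"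
  let ?w = "wv d \<Phi> e"
  let ?ua = "u0 d $ a" and ?ub = "u0 d $ b"
  have D0: "?D \<noteq> 0" using d by simp
  have Gab: "Gmat d \<Phi> e $$ (a,b) = (\<Sum>k<d. if ?t k = 0 then 0 else ?p k $ a * cnj (?p k $ b) / ?t k)"
  proof -
    have kb: "ketbra (vecX d (Pk d \<Phi> e k)) $$ (a,b) = vecX d (Pk d \<Phi> e k) $ a * cnj (vecX d (Pk d \<Phi> e k) $ b)" for k
      using ab by (intro ketbra_index) simp_all
    have "Gmat d \<Phi> e $$ (a,b) = (\<Sum>k<d. if tk d \<Phi> e k = 0 then 0 else ketbra (vecX d (Pk d \<Phi> e k)) $$ (a,b) / tk d \<Phi> e k)"
      unfolding Gmat_def Let_def Pk_def[symmetric] tk_def[symmetric] using ab by simp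
    also have "\<dots> = (\<Sum>k<d. if tk d \<Phi> e k = 0 then 0 else vecX d (Pk d \<Phi> e k) $ a * cnj (vecX d (Pk d \<Phi> e k) $ b) / tk d \<Phi> e k)"
      by (intro sum.cong refl, simp only: kb)
    finally show ?thesis .
  qed
  have perk: "(if ?t k = 0 then 0 else ?p k $ a * cnj (?p k $ b) / ?t k)
     = ?w k $ a * cnj (?w k $ b) + ?p k $ a * ?ub / ?D + ?ua * cnj (?p k $ b) / ?D - ?t k * ?ua * ?ub / (?D * ?D)"
    if k: "k < d" for k
  proof (cases "?t k = 0")
    case True
    then have "Pk d \<Phi> e k = 0\<^sub>m d d" by (rule tk_zero[OF qc o k])
    then have "?p k $ a = 0" "?p k $ b = 0" using ab by (auto simp: vecX_index divmod_lt)
    moreover have "?w k $ a = 0" "?w k $ b = 0" using ab True by (auto simp: wv_def)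
    ultimately show ?thesis using True by simp
  next
    case False
    have r: "?t k = of_real (Re (?t k))" "Re (?t k) \<ge> 0" by (rule tk_real[OF qc o k])+
    have rpos: "Re (?t k) > 0" using r False by (metis less_eq_real_def of_real_0)
    have wa: "?w k $ a = (?p k $ a - ?t k / ?D * ?ua) / of_real (sqrt (Re (?t k)))" using ab by (simp add: wv_def)
    have wb: "?w k $ b = (?p k $ b - ?t k / ?D * ?ub) / of_real (sqrt (Re (?t k)))" using ab by (simp add: wv_def)
    show ?thesis unfolding wa wb if_not_P[OF False]
      by (rule alg[OF r(1) rpos u0_real[OF ab(2)] D0], simp)
  qed
  have "Gmat d \<Phi> e $$ (a,b) = (\<Sum>k<d. ?w k $ a * cnj (?w k $ b)) + (\<Sum>k<d. ?p k $ a) * ?ub / ?D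
      + ?ua * cnj (\<Sum>k<d. ?p k $ b) / ?D - (\<Sum>k<d. ?t k) * ?ua * ?ub / (?D * ?D)"
    unfolding Gab by (simp add: perk sum.distrib sum_subtractf sum_divide_distrib[symmetric] sum_distrib_left sum_distrib_right cnj_sum)
  also have "\<dots> = (\<Sum>k<d. ?w k $ a * cnj (?w k $ b)) + ?ua * ?ub / ?D"
    using D0 by (simp add: pk_sum[OF qc o ab(1)] pk_sum[OF qc o ab(2)] tk_sum[OF qc o] u0_real[OF ab(2)] field_simps)
  also have "?ua * ?ub / ?D = uv d $ a * cnj (uv d $ b)"
  proof -
    have ss: "complex_of_real (sqrt (real d)) * complex_of_real (sqrt (real d)) = ?D" by (simp flip: of_real_mult)
    show ?thesis using ab by (simp add: uv_def u0_real ss)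
  qed
  finally show "Gmat d \<Phi> e $$ (a,b) = (rk (d*d) 1 (\<lambda>_. uv d) + rk (d*d) d (wv d \<Phi> e)) $$ (a,b)"
    using ab by simp
qed (auto simp: Gmat_def)



lemma rk_cnj: "a < n \<Longrightarrow> b < n \<Longrightarrow> cnj (rk n m w $$ (b,a)) = rk n m w $$ (a,b)"
  by (simp add: cnj_sum mult.commute)

lemma mtrace_add: "X \<in> carrier_mat n n \<Longrightarrow> Y \<in> carrier_mat n n \<Longrightarrow> mtrace (X + Y) = mtrace X + mtrace Y"
  by (simp add: mtrace_def sum.distrib)

lemma psd_matsum: assumes "finite I" "\<forall>i\<in>I. psd_mat n (M i)"
  shows "psd_mat n (mat n n (\<lambda>(a,b). \<Sum>i\<in>I. M i $$ (a,b)))"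
  unfolding psd_mat_def
proof (intro conjI ballI)
  show "mat n n (\<lambda>(a,b). \<Sum>i\<in>I. M i $$ (a,b)) \<in> carrier_mat n n" by simp
  fix x :: "complex vec" assume x: "x \<in> carrier_vec n"
  have xd: "dim_vec x = n" using x by simp
  have Mc: "\<And>i. i \<in> I \<Longrightarrow> M i \<in> carrier_mat n n" using assms(2) by (simp add: psd_mat_def)
  have eq: "cinner x (mat n n (\<lambda>(a,b). \<Sum>i\<in>I. M i $$ (a,b)) *\<^sub>v x) = (\<Sum>i\<in>I. cinner x (M i *\<^sub>v x))"
  proof -
    have "cinner x (mat n n (\<lambda>(a,b). \<Sum>i\<in>I. M i $$ (a,b)) *\<^sub>v x) = (\<Sum>i\<in>I. cinner x (mat n n (\<lambda>(a,b). M i $$ (a,b)) *\<^sub>v x))"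
      by (rule quad_matsum[OF xd assms(1)])
    also have "\<dots> = (\<Sum>i\<in>I. cinner x (M i *\<^sub>v x))"
      by (intro sum.cong refl, simp only: mat_self[OF Mc])
    finally show ?thesis .
  qed
  have each: "\<And>i. i \<in> I \<Longrightarrow> cinner x (M i *\<^sub>v x) \<in> \<real> \<and> 0 \<le> Re (cinner x (M i *\<^sub>v x))"
    using assms(2) x psd_quadD by blast
  show "cinner x (mat n n (\<lambda>(a,b). \<Sum>i\<in>I. M i $$ (a,b)) *\<^sub>v x) \<in> \<real>"
    unfolding eq using each by (auto simp: complex_is_Real_iff Im_sum intro: sum.neutral)
  show "0 \<le> Re (cinner x (mat n n (\<lambda>(a,b). \<Sum>i\<in>I. M i $$ (a,b)) *\<^sub>v x))"
    unfolding eq Re_sum using each by (intro sum_nonneg, auto)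
qed

theorem proposition4p9:
  fixes d N :: nat
    and \<Phi> :: "nat \<Rightarrow> complex mat \<Rightarrow> complex mat"
    and e :: "nat \<Rightarrow> nat \<Rightarrow> complex vec"
  assumes "d \<ge> 1" and "N \<ge> 1"
    and "\<And>i. i < N \<Longrightarrow> quantum_channel d (\<Phi> i)"
    and "\<And>i. i < N \<Longrightarrow> onb d (e i)"
    and "\<And>i j. i < N \<Longrightarrow> j < N \<Longrightarrow> i \<noteq> j \<Longrightarrow>
           hs_inner (Gmat d (\<Phi> i) (e i) - omega d) (Gmat d (\<Phi> j) (e j) - omega d) = 0"
  shows "(\<exists>H. hermitian_mat (d * d) H \<and>
             (\<forall>i<N. loewner_le (d * d) (Gmat d (\<Phi> i) (e i)) H) \<and>
             mtrace H = 1 - of_nat N + (\<Sum>i<N. mtrace (Gmat d (\<Phi> i) (e i))))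
       \<and> (\<forall>H. hermitian_mat (d * d) H \<and>
             (\<forall>i<N. loewner_le (d * d) (Gmat d (\<Phi> i) (e i)) H) \<longrightarrow>
             Re (1 - of_nat N + (\<Sum>i<N. mtrace (Gmat d (\<Phi> i) (e i)))) \<le> Re (mtrace H))"
proof -
  note d = assms(1) and N = assms(2) and qc = assms(3) and o = assms(4) and hs = assms(5)
  define n where "n = d * d"
  define w where "w i = wv d (\<Phi> i) (e i)" for i
  define A where "A i = rk n d (w i)" for i
  define Om where "Om = rk n 1 (\<lambda>_. uv d)"
  have Ac: "A i \<in> carrier_mat n n" for i by (simp add: A_def)
  have Omc: "Om \<in> carrier_mat n n" by (simp add: Om_def)
  have dA[simp]: "dim_row (A i) = n" "dim_col (A i) = n" for i by (simp_all add: A_def)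
  have dOm[simp]: "dim_row Om = n" "dim_col Om = n" by (simp_all add: Om_def)
  have Gi: "Gmat d (\<Phi> i) (e i) = Om + A i" if "i < N" for i
    unfolding Om_def A_def w_def n_def by (rule G_decomp[OF qc[OF that] o[OF that] d])
  have om: "omega d = Om" unfolding Om_def n_def by (rule omega_rk[OF d])
  have wd: "dim_vec (w i k) = n" for i k by (simp add: w_def n_def)
  have trOm: "mtrace Om = 1"
  proof -
    have "mtrace Om = cinner (uv d) (uv d)" unfolding Om_def using rk_trace[of 1 "\<lambda>_. uv d" n] by (simp add: n_def)
    then show ?thesis using uv_uv[OF d] by simp
  qed
  have trA: "mtrace (A i) = (\<Sum>k<d. cinner (w i k) (w i k))" for i
    unfolding A_def by (rule rk_trace, simp add: wd)
  have trG: "mtrace (Gmat d (\<Phi> i) (e i)) = 1 + mtrace (A i)" if "i < N" for i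
    unfolding Gi[OF that] using mtrace_add[OF Omc Ac] trOm by simp
  have target: "1 - of_nat N + (\<Sum>i<N. mtrace (Gmat d (\<Phi> i) (e i))) = 1 + (\<Sum>i<N. mtrace (A i))"
  proof -
    have "(\<Sum>i<N. mtrace (Gmat d (\<Phi> i) (e i))) = (\<Sum>i<N. 1 + mtrace (A i))" by (intro sum.cong refl, simp add: trG)
    also have "\<dots> = of_nat N + (\<Sum>i<N. mtrace (A i))" by (simp add: sum.distrib)
    finally show ?thesis by simp
  qed
  have Apsd: "psd_mat n (A i)" for i unfolding A_def by (rule rk_psd, simp add: wd)
  define H0 where "H0 = mat n n (\<lambda>(a,b). Om $$ (a,b) + (\<Sum>i<N. A i $$ (a,b)))"
  have H0c: "H0 \<in> carrier_mat n n" by (simp add: H0_def)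
  have ex: "hermitian_mat (d * d) H0 \<and>
             (\<forall>i<N. loewner_le (d * d) (Gmat d (\<Phi> i) (e i)) H0) \<and>
             mtrace H0 = 1 - of_nat N + (\<Sum>i<N. mtrace (Gmat d (\<Phi> i) (e i)))"
  proof (intro conjI allI impI)
    show "hermitian_mat (d * d) H0"
      unfolding hermitian_mat_def n_def[symmetric]
    proof
      show "H0 \<in> carrier_mat n n" by (rule H0c)
      show "mat_adj H0 = H0"
      proof (intro eq_matI)
        fix a b assume "a < dim_row H0" "b < dim_col H0"
        then have ab: "a < n" "b < n" by (auto simp: H0_def)
        show "mat_adj H0 $$ (a,b) = H0 $$ (a,b)"
          using ab by (simp add: mat_adj_def H0_def Om_def A_def cnj_sum rk_cnj del: rk_index)
      qed (auto simp: mat_adj_def H0_def)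
    qed
    fix j assume j: "j < N"
    show "loewner_le (d * d) (Gmat d (\<Phi> j) (e j)) H0"
      unfolding loewner_le_def n_def[symmetric] Gi[OF j]
    proof (intro conjI)
      show "Om + A j \<in> carrier_mat n n" using Omc Ac by simp
      show "H0 \<in> carrier_mat n n" by (rule H0c)
      have "H0 - (Om + A j) = mat n n (\<lambda>(a,b). \<Sum>i\<in>{..<N} - {j}. A i $$ (a,b))"
      proof (intro eq_matI)
        fix a b assume "a < dim_row (mat n n (\<lambda>(a,b). \<Sum>i\<in>{..<N} - {j}. A i $$ (a,b)))"
          "b < dim_col (mat n n (\<lambda>(a,b). \<Sum>i\<in>{..<N} - {j}. A i $$ (a,b)))"
        then have ab: "a < n" "b < n" by auto
        have "(\<Sum>i<N. A i $$ (a,b)) = A j $$ (a,b) + (\<Sum>i\<in>{..<N} - {j}. A i $$ (a,b))"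
          using j by (subst sum.remove[of _ j], auto)
        then show "(H0 - (Om + A j)) $$ (a,b) = mat n n (\<lambda>(a,b). \<Sum>i\<in>{..<N} - {j}. A i $$ (a,b)) $$ (a,b)"
          using ab Omc Ac by (simp add: H0_def)
      qed (use H0c in auto)
      then show "psd_mat n (H0 - (Om + A j))" using psd_matsum[of "{..<N} - {j}" n A] Apsd by simp
    qed
  next
    have "mtrace H0 = (\<Sum>a<n. Om $$ (a,a)) + (\<Sum>i<N. \<Sum>a<n. A i $$ (a,a))"
      unfolding mtrace_def using H0c by (simp add: H0_def sum.distrib sum.swap[of _ "{..<n}"])
    also have "\<dots> = mtrace Om + (\<Sum>i<N. mtrace (A i))" using Omc Ac by (simp add: mtrace_def)
    finally show "mtrace H0 = 1 - of_nat N + (\<Sum>i<N. mtrace (Gmat d (\<Phi> i) (e i)))"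
      unfolding target trOm .
  qed
  have lb: "Re (1 - of_nat N + (\<Sum>i<N. mtrace (Gmat d (\<Phi> i) (e i)))) \<le> Re (mtrace H)"
    if H: "hermitian_mat (d * d) H" "\<forall>i<N. loewner_le (d * d) (Gmat d (\<Phi> i) (e i)) H" for H
  proof -
    have ww: "\<forall>i<N. \<forall>j<N. i \<noteq> j \<longrightarrow> (\<forall>k<d. \<forall>l<d. cinner (w i k) (w j l) = 0)"
    proof (intro allI impI)
      fix i j k l assume ij: "i < N" "j < N" "i \<noteq> j" and kl: "k < d" "l < d"
      have GA: "Gmat d (\<Phi> i) (e i) - omega d = A i" if "i < N" for i
        unfolding Gi[OF that] om using Omc Ac by (intro eq_matI, auto)
      have "hs_inner (A i) (A j) = 0" using hs[OF ij] unfolding GA[OF ij(1)] GA[OF ij(2)] .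
      then have "(\<Sum>k<d. \<Sum>l<d. complex_of_real ((cmod (cinner (w i k) (w j l)))^2)) = 0"
        unfolding A_def by (subst rk_hs[symmetric], auto simp: wd)
      then have "(\<Sum>k<d. \<Sum>l<d. (cmod (cinner (w i k) (w j l)))^2) = 0"
        by (simp only: of_real_sum[symmetric] of_real_eq_0_iff)
      then have "\<forall>k\<in>{..<d}. (\<Sum>l<d. (cmod (cinner (w i k) (w j l)))^2) = 0"
        by (subst sum_nonneg_eq_0_iff[symmetric], auto intro: sum_nonneg)
      then have "(\<Sum>l<d. (cmod (cinner (w i k) (w j l)))^2) = 0" using kl by auto
      then have "\<forall>l\<in>{..<d}. (cmod (cinner (w i k) (w j l)))^2 = 0"
        by (subst sum_nonneg_eq_0_iff[symmetric], auto)
      then show "cinner (w i k) (w j l) = 0" using kl by auto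
    qed
    have HG: "\<forall>i<N. psd_mat n (H - (rk n 1 (\<lambda>_. uv d) + rk n d (w i)))"
      using H(2) unfolding loewner_le_def n_def[symmetric] by (auto simp: Gi Om_def A_def)
    have la: "1 + (\<Sum>i<N. \<Sum>k<d. Re (cinner (w i k) (w i k))) \<le> Re (mtrace H)"
    proof (rule lower_abstract[OF N _ uv_uv[OF d]])
      show "dim_vec (uv d) = n" by (simp add: n_def)
      show "\<forall>i<N. \<forall>k<d. dim_vec (w i k) = n" by (simp add: wd)
      show "\<forall>i<N. \<forall>k<d. cinner (w i k) (uv d) = 0" unfolding w_def using wv_uv[OF qc o d] by auto
      show "\<forall>i<N. \<forall>j<N. i \<noteq> j \<longrightarrow> (\<forall>k<d. \<forall>l<d. cinner (w i k) (w j l) = 0)" by (rule ww)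
      show "H \<in> carrier_mat n n" using H(1) unfolding hermitian_mat_def n_def by auto
      show "\<forall>i<N. psd_mat n (H - (rk n 1 (\<lambda>_. uv d) + rk n d (w i)))" by (rule HG)
    qed
    have "Re (1 - of_nat N + (\<Sum>i<N. mtrace (Gmat d (\<Phi> i) (e i)))) = 1 + (\<Sum>i<N. \<Sum>k<d. Re (cinner (w i k) (w i k)))"
      unfolding target by (simp add: trA Re_sum)
    then show ?thesis using la by simp
  qed
  show ?thesis using ex lb by blast
qed


end
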